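(* Let $\Delta$ be a pure simplicial complex of dimension $m-1\ge2$ whose clique decomposition $\Delta=\Delta_1\cup\cdots\cup\Delta_r$ satisfies conditions (i) and (ii), and such that each clique $\Delta_i$ is a single $(m-1)$-simplex. Then: (a) if $\Delta$ is closed, then $J_\Delta$ is generated by a regular sequence; (b) for every finite simple graph $G$ and every integer $m\ge|V(G)|$ (with $m\ge 3$), there exists a closed pure $(m-1)$-dimensional simplicial complex $\Delta$ satisfying (i) and (ii), each of whose cliques is a single $(m-1)$-simplex, with $G_\Delta\cong G$; (c) if $\dim\Delta+1$ is greater than or equal to the number of facets of $\Delta$, then $\Delta$ is closed.
   Context: Let $K$ be a field, $X=(x_{ij})$ an $m\times n$ matrix of indeterminates, $S=K[X]$, and $\Delta$ a pure $(m-1)$-dimensional simplicial complex on $[n]$. For $1\le a_1<\dots<a_m\le n$, $[a_1\ldots a_m]$ is the maximal minor with columns $a_1,\dots,a_m$; $J_\Delta=(\mu_F : F\in\mathcal{F}(\Delta))$ with $\mu_F=[a_1\ldots a_m]$ for a facet $F=\{a_1<\dots<a_m\}$. Clique decomposition: let $\mathcal{S}$ be the set of simplices $\Gamma$ with vertices in $[n]$, $\dim\Gamma\ge m-1$, whose $(m-1)$-skeleton is contained in $\Delta$; the maximal elements $\Gamma_1,\dots,\Gamma_r$ of $\mathcal{S}$ give the cliques $\Delta_i=\Gamma_i^{(m-1)}$, $\Delta=\Delta_1\cup\cdots\cup\Delta_r$; $V(\Delta_i)$ is the vertex set of $\Delta_i$. Conditions: (i) $|V(\Delta_i)\cap V(\Delta_j)|\le1$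 for all $i<j$; (ii) $V(\Delta_i)\cap V(\Delta_j)\cap V(\Delta_k)=\emptyset$ for all $i<j<k$. $G_\Delta$ is the simple graph on vertices $v_1,\dots,v_r$ with an edge $\{v_i,v_j\}$ ($i\ne j$) iff $V(\Delta_i)\cap V(\Delta_j)\ne\emptyset$. $\Delta$ is closed with respect to a labeling of its vertices by $[n]$ if for any two facets $F=\{a_1<\dots<a_m\}$, $G=\{b_1<\dots<b_m\}$ with $a_i=b_i$ for some $i$, every $m$-subset of $F\cup G$ is a facet of $\Delta$; $\Delta$ is closed if some labeling makes it closed (in (a), $J_\Delta$ is formed with respect to such a labeling). *)

theory Defs
  imports "HOL-Library.Poly_Mapping" "HOL-Combinatorics.Permutations"
begin

text \<open>The ring S = K[X] of the paper is
  the subring of polynomials all of whose variables lie in [m] x [n].\<close>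

type_synonym 'a mpoly = "((nat \<times> nat) \<Rightarrow>\<^sub>0 nat) \<Rightarrow>\<^sub>0 'a"

definition xvar :: "nat \<Rightarrow> nat \<Rightarrow> 'a::comm_ring_1 mpoly" where
  "xvar i j = Poly_Mapping.single (Poly_Mapping.single (i, j) 1) 1"

definition polyring :: "nat \<Rightarrow> nat \<Rightarrow> 'a::comm_ring_1 mpoly set" where
  "polyring m n = {p :: 'a mpoly. \<forall>mon \<in> Poly_Mapping.keys p. Poly_Mapping.keys mon \<subseteq> ({1..m} \<times> {1..n})}"

definition ideal_gen :: "'a::comm_ring_1 set \<Rightarrow> 'a set \<Rightarrow> 'a set" where
  "ideal_gen R A = {p. \<exists>c. (\<forall>a\<in>A. c a \<in> R) \<and> p = (\<Sum>a\<in>A. c a * a)}"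

definition regular_sequence :: "'a::comm_ring_1 set \<Rightarrow> 'a list \<Rightarrow> bool" where
  "regular_sequence R fs \<longleftrightarrow>
     set fs \<subseteq> R \<and> ideal_gen R (set fs) \<noteq> R \<and>
     (\<forall>i < length fs. \<forall>g \<in> R.
        g * fs ! i \<in> ideal_gen R (set (take i fs)) \<longrightarrow> g \<in> ideal_gen R (set (take i fs)))"

text \<open>Maximal minor [a_1 ... a_m] of the m x n matrix X = (x_ij), columns F = {a_1<...<a_m}.\<close>
definition maxminor :: "nat \<Rightarrow> nat set \<Rightarrow> 'a::comm_ring_1 mpoly" where
  "maxminor m F = (let a = sorted_list_of_set F in
     \<Sum>\<sigma> \<in> {\<sigma>. \<sigma> permutes {0..<m}}. of_int (sign \<sigma>) * (\<Prod>i<m. xvar (Suc i) (a ! \<sigma> i)))"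

definition J_Delta :: "nat \<Rightarrow> nat \<Rightarrow> nat set set \<Rightarrow> 'a::comm_ring_1 mpoly set" where
  "J_Delta m n Fs = ideal_gen (polyring m n) (maxminor m ` Fs)"

text \<open>A pure (m-1)-dimensional simplicial complex on [n], represented by its
  (nonempty) set of facets, each an m-subset of [n].\<close>
definition pure_complex :: "nat \<Rightarrow> nat \<Rightarrow> nat set set \<Rightarrow> bool" where
  "pure_complex m n Fs \<longleftrightarrow> Fs \<noteq> {} \<and> (\<forall>F\<in>Fs. F \<subseteq> {1..n} \<and> card F = m)"

definition clique_simplices :: "nat \<Rightarrow> nat \<Rightarrow> nat set set \<Rightarrow> nat set set" where
  "clique_simplices m n Fs = {\<Gamma>. \<Gamma> \<subseteq> {1..n} \<and> m \<le> card \<Gamma> \<and>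
      (\<forall>A. A \<subseteq> \<Gamma> \<and> card A = m \<longrightarrow> A \<in> Fs)}"

text \<open>Vertex sets V(Delta_i) of the cliques: the maximal elements of S.\<close>
definition cliques :: "nat \<Rightarrow> nat \<Rightarrow> nat set set \<Rightarrow> nat set set" where
  "cliques m n Fs = {\<Gamma> \<in> clique_simplices m n Fs.
      \<not> (\<exists>\<Gamma>' \<in> clique_simplices m n Fs. \<Gamma> \<subset> \<Gamma>')}"

definition cond_i :: "nat \<Rightarrow> nat \<Rightarrow> nat set set \<Rightarrow> bool" where
  "cond_i m n Fs \<longleftrightarrow> (\<forall>V\<in>cliques m n Fs. \<forall>W\<in>cliques m n Fs. V \<noteq> W \<longrightarrow> card (V \<inter> W) \<le> 1)"

definition cond_ii :: "nat \<Rightarrow> nat \<Rightarrow> nat set set \<Rightarrow> bool" where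
  "cond_ii m n Fs \<longleftrightarrow> (\<forall>U\<in>cliques m n Fs. \<forall>V\<in>cliques m n Fs. \<forall>W\<in>cliques m n Fs.
      U \<noteq> V \<and> U \<noteq> W \<and> V \<noteq> W \<longrightarrow> U \<inter> V \<inter> W = {})"

definition cliques_simplices :: "nat \<Rightarrow> nat \<Rightarrow> nat set set \<Rightarrow> bool" where
  "cliques_simplices m n Fs \<longleftrightarrow> (\<forall>V\<in>cliques m n Fs. card V = m)"

definition closed_wrt :: "nat \<Rightarrow> nat set set \<Rightarrow> bool" where
  "closed_wrt m Fs \<longleftrightarrow> (\<forall>F\<in>Fs. \<forall>G\<in>Fs.
     (\<exists>i<m. sorted_list_of_set F ! i = sorted_list_of_set G ! i) \<longrightarrow>
     (\<forall>A. A \<subseteq> F \<union> G \<and> card A = m \<longrightarrow> A \<in> Fs))"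

definition closed_complex :: "nat \<Rightarrow> nat \<Rightarrow> nat set set \<Rightarrow> bool" where
  "closed_complex m n Fs \<longleftrightarrow> (\<exists>\<pi>. bij_betw \<pi> {1..n} {1..n} \<and> closed_wrt m ((`) \<pi> ` Fs))"

definition simple_graph :: "'v set \<Rightarrow> 'v set set \<Rightarrow> bool" where
  "simple_graph V E \<longleftrightarrow> finite V \<and> (\<forall>e\<in>E. e \<subseteq> V \<and> card e = 2)"

definition clique_graph_iso :: "nat \<Rightarrow> nat \<Rightarrow> nat set set \<Rightarrow> 'v set \<Rightarrow> 'v set set \<Rightarrow> bool" where
  "clique_graph_iso m n Fs V E \<longleftrightarrow> (\<exists>f. bij_betw f (cliques m n Fs) V \<and>
     (\<forall>C\<in>cliques m n Fs. \<forall>D\<in>cliques m n Fs. C \<noteq> D \<longrightarrow>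
        ({f C, f D} \<in> E \<longleftrightarrow> C \<inter> D \<noteq> {})))"

end

theory Submission
  imports Defs
begin

type_synonym mon = "(nat \<times> nat) \<Rightarrow>\<^sub>0 nat"

definition hcomp :: "(mon \<Rightarrow> bool) \<Rightarrow> 'a::comm_ring_1 mpoly \<Rightarrow> 'a mpoly" where
  "hcomp P p = Poly_Mapping.mapp (\<lambda>k v. if P k then v else 0) p"

lemma lookup_hcomp: "Poly_Mapping.lookup (hcomp P p) k = (if P k then Poly_Mapping.lookup p k else 0)"
  by (simp add: hcomp_def lookup_mapp when_def in_keys_iff)

lemma keys_hcomp: "Poly_Mapping.keys (hcomp P p) = {k \<in> Poly_Mapping.keys p. P k}"
  by (auto simp: in_keys_iff lookup_hcomp split: if_splits)

lemma hcomp_add: "hcomp P (p + q) = hcomp P p + hcomp P q"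
  by (rule poly_mapping_eqI) (simp add: lookup_hcomp lookup_add)

lemma hcomp_diff: "hcomp P (p - q) = hcomp P p - hcomp P q"
  by (rule poly_mapping_eqI) (simp add: lookup_hcomp lookup_minus)

lemma hcomp_zero[simp]: "hcomp P 0 = 0"
  by (rule poly_mapping_eqI) (simp add: lookup_hcomp)

lemma hcomp_sum: "hcomp P (sum f A) = (\<Sum>a\<in>A. hcomp P (f a))"
  by (induction A rule: infinite_finite_induct) (auto simp: hcomp_add)

lemma hcomp_id: "(\<And>k. k \<in> Poly_Mapping.keys p \<Longrightarrow> P k) \<Longrightarrow> hcomp P p = p"
  by (rule poly_mapping_eqI) (auto simp: lookup_hcomp in_keys_iff)

lemma hcomp_none: "(\<And>k. k \<in> Poly_Mapping.keys p \<Longrightarrow> \<not> P k) \<Longrightarrow> hcomp P p = 0"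
  by (rule poly_mapping_eqI) (auto simp: lookup_hcomp in_keys_iff)

lemma hcomp_split: "p = hcomp P p + hcomp (\<lambda>k. \<not> P k) p"
  by (rule poly_mapping_eqI) (simp add: lookup_hcomp lookup_add)

lemma lookup_mult_single:
  fixes p :: "'a::comm_ring_1 mpoly"
  shows "Poly_Mapping.lookup (p * Poly_Mapping.single \<mu> c) (\<nu> + \<mu>) = Poly_Mapping.lookup p \<nu> * c"
proof -
  have "Poly_Mapping.lookup (p * Poly_Mapping.single \<mu> c) (\<nu> + \<mu>) =
     (\<Sum>l. Poly_Mapping.lookup p l * (\<Sum>q. (c when \<mu> = q) when \<nu> + \<mu> = l + q))"
    by (simp add: lookup_mult lookup_single)
  also have "\<dots> = (\<Sum>l. Poly_Mapping.lookup p l * (c when l = \<nu>))"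
  proof -
    have "(\<Sum>q. (c when \<mu> = q) when \<nu> + \<mu> = l + q) = (c when l = \<nu>)" for l
    proof -
      have "(\<Sum>q. (c when \<mu> = q) when \<nu> + \<mu> = l + q) = (\<Sum>q. (c when \<nu> + \<mu> = l + q) when \<mu> = q)"
        by (simp add: when_when conj_commute)
      also have "\<dots> = (c when \<nu> + \<mu> = l + \<mu>)" by simp
      also have "\<dots> = (c when l = \<nu>)" by (auto simp: when_def)
      finally show ?thesis .
    qed
    then show ?thesis by simp
  qed
  also have "\<dots> = (\<Sum>l. (Poly_Mapping.lookup p l * c) when l = \<nu>)"
    by (simp add: mult_when)
  also have "\<dots> = Poly_Mapping.lookup p \<nu> * c" by simp
  finally show ?thesis .
qed

lemma keys_mult_single_sub:
  fixes p :: "'a::comm_ring_1 mpoly"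
  shows "Poly_Mapping.keys (p * Poly_Mapping.single \<mu> c) \<subseteq> (\<lambda>\<nu>. \<nu> + \<mu>) ` Poly_Mapping.keys p"
  using keys_mult[of p "Poly_Mapping.single \<mu> c"] by (auto split: if_splits)

lemma lookup_mult_single2:
  fixes p :: "'a::comm_ring_1 mpoly"
  shows "Poly_Mapping.lookup (p * Poly_Mapping.single \<mu> c) \<kappa> =
     (if \<exists>\<nu>. \<kappa> = \<nu> + \<mu> then Poly_Mapping.lookup p (\<kappa> - \<mu>) * c else 0)"
proof (cases "\<exists>\<nu>. \<kappa> = \<nu> + \<mu>")
  case True
  then obtain \<nu> where k: "\<kappa> = \<nu> + \<mu>" by blast
  then show ?thesis by (simp add: lookup_mult_single)
next
  case False
  then have "\<kappa> \<notin> Poly_Mapping.keys (p * Poly_Mapping.single \<mu> c)"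
    using keys_mult_single_sub[of p \<mu> c] by auto
  then show ?thesis using False by (simp add: in_keys_iff)
qed

lemma keys_mult_single1:
  fixes p :: "'a::comm_ring_1 mpoly"
  shows "Poly_Mapping.keys (p * Poly_Mapping.single \<mu> 1) = (\<lambda>\<nu>. \<nu> + \<mu>) ` Poly_Mapping.keys p"
proof
  show "Poly_Mapping.keys (p * Poly_Mapping.single \<mu> 1) \<subseteq> (\<lambda>\<nu>. \<nu> + \<mu>) ` Poly_Mapping.keys p"
    by (rule keys_mult_single_sub)
  show "(\<lambda>\<nu>. \<nu> + \<mu>) ` Poly_Mapping.keys p \<subseteq> Poly_Mapping.keys (p * Poly_Mapping.single \<mu> 1)"
    by (auto simp: in_keys_iff lookup_mult_single)
qed

lemma mult_single1_inj:
  fixes p :: "'a::comm_ring_1 mpoly"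
  shows "p * Poly_Mapping.single \<mu> 1 = 0 \<longleftrightarrow> p = 0"
  using keys_mult_single1[of p \<mu>] by (metis image_is_empty keys_eq_empty)

lemma poly_as_sum: "(p::'a::comm_ring_1 mpoly) = (\<Sum>\<nu>\<in>Poly_Mapping.keys p. Poly_Mapping.single \<nu> (Poly_Mapping.lookup p \<nu>))"
proof (rule poly_mapping_eqI)
  fix k
  show "Poly_Mapping.lookup p k = Poly_Mapping.lookup (\<Sum>\<nu>\<in>Poly_Mapping.keys p. Poly_Mapping.single \<nu> (Poly_Mapping.lookup p \<nu>)) k"
    by (cases "k \<in> Poly_Mapping.keys p") (simp_all add: lookup_sum lookup_single when_def in_keys_iff)
qed

definition W :: "mon \<Rightarrow> nat" where
  "W \<nu> = (\<Sum>x\<in>Poly_Mapping.keys \<nu>. Poly_Mapping.lookup \<nu> x * (fst x * snd x))"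

lemma W_add: "W (a + b) = W a + W b"
  unfolding W_def by (rule setsum_keys_plus_distrib) (auto simp: algebra_simps)

lemma W_zero[simp]: "W 0 = 0" by (simp add: W_def)

lemma W_single: "W (Poly_Mapping.single x k) = k * (fst x * snd x)"
  by (simp add: W_def)

lemma keys_add_nat: "Poly_Mapping.keys ((a::mon) + b) = Poly_Mapping.keys a \<union> Poly_Mapping.keys b"
  by (auto simp: in_keys_iff lookup_add)

lemma divides_key:
  fixes \<nu> \<mu> \<rho> \<mu>' :: mon
  assumes "Poly_Mapping.keys \<mu> \<inter> Poly_Mapping.keys \<mu>' = {}" "\<nu> + \<mu> = \<rho> + \<mu>'"
  shows "\<nu> = (\<nu> - \<mu>') + \<mu>'"
proof (rule poly_mapping_eqI)
  fix x
  have "Poly_Mapping.lookup \<mu>' x \<le> Poly_Mapping.lookup \<nu> x"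
  proof (cases "x \<in> Poly_Mapping.keys \<mu>'")
    case True
    then have "Poly_Mapping.lookup \<mu> x = 0" using assms(1) by (auto simp: in_keys_iff)
    moreover have "Poly_Mapping.lookup (\<nu> + \<mu>) x = Poly_Mapping.lookup (\<rho> + \<mu>') x" using assms(2) by simp
    ultimately show ?thesis by (simp add: lookup_add)
  next
    case False then show ?thesis by (simp add: in_keys_iff)
  qed
  then show "Poly_Mapping.lookup \<nu> x = Poly_Mapping.lookup (\<nu> - \<mu>' + \<mu>') x"
    by (simp add: lookup_add lookup_minus)
qed

lemma keys_diff_sub: "Poly_Mapping.keys ((a::'a::comm_ring_1 mpoly) - b) \<subseteq> Poly_Mapping.keys a \<union> Poly_Mapping.keys b"
  by (auto simp: in_keys_iff lookup_minus)

lemma keys_uminus': "Poly_Mapping.keys (- (a::'a::comm_ring_1 mpoly)) = Poly_Mapping.keys a"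
  by (auto simp: in_keys_iff)

lemma polyring_iff: "p \<in> polyring m n \<longleftrightarrow> (\<forall>\<nu>\<in>Poly_Mapping.keys p. Poly_Mapping.keys \<nu> \<subseteq> {1..m} \<times> {1..n})"
  by (simp add: polyring_def)

lemma pr_zero[simp]: "0 \<in> polyring m n" by (simp add: polyring_iff)
lemma pr_one[simp]: "1 \<in> polyring m n" by (simp add: polyring_iff)

lemma pr_add: "p \<in> polyring m n \<Longrightarrow> q \<in> polyring m n \<Longrightarrow> p + q \<in> polyring m n"
  unfolding polyring_iff using keys_add[of p q] by blast

lemma pr_diff: "p \<in> polyring m n \<Longrightarrow> q \<in> polyring m n \<Longrightarrow> p - q \<in> polyring m n"
  unfolding polyring_iff using keys_diff_sub[of p q] by blast

lemma pr_uminus: "p \<in> polyring m n \<Longrightarrow> - p \<in> polyring m n"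
  unfolding polyring_iff using keys_uminus'[of p] by blast

lemma pr_mult: "p \<in> polyring m n \<Longrightarrow> q \<in> polyring m n \<Longrightarrow> p * q \<in> polyring m n"
proof -
  assume p: "p \<in> polyring m n" and q: "q \<in> polyring m n"
  show ?thesis unfolding polyring_iff
  proof
    fix \<nu> assume "\<nu> \<in> Poly_Mapping.keys (p * q)"
    then obtain a b where ab: "a \<in> Poly_Mapping.keys p" "b \<in> Poly_Mapping.keys q" "\<nu> = a + b"
      using keys_mult[of p q] by blast
    then show "Poly_Mapping.keys \<nu> \<subseteq> {1..m} \<times> {1..n}"
      using p q unfolding polyring_iff by (simp add: keys_add_nat)
  qed
qed

lemma pr_sum: "(\<And>a. a \<in> S \<Longrightarrow> f a \<in> polyring m n) \<Longrightarrow> sum f S \<in> polyring m n"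
  by (induction S rule: infinite_finite_induct) (auto intro: pr_add)

lemma pr_hcomp: "p \<in> polyring m n \<Longrightarrow> hcomp P p \<in> polyring m n"
  unfolding polyring_iff by (auto simp: keys_hcomp)

lemma pr_single: "Poly_Mapping.keys \<nu> \<subseteq> {1..m} \<times> {1..n} \<Longrightarrow> Poly_Mapping.single \<nu> c \<in> polyring m n"
  unfolding polyring_iff by auto

lemma pr_keys_sub: "p \<in> polyring m n \<Longrightarrow> Poly_Mapping.keys q \<subseteq> Poly_Mapping.keys p \<Longrightarrow> q \<in> polyring m n"
  unfolding polyring_iff by blast

abbreviation IG where "IG m n A \<equiv> ideal_gen (polyring m n) A"

lemma ig_zero: "0 \<in> IG m n A"
  unfolding ideal_gen_def by (rule CollectI, rule exI[of _ "\<lambda>_. 0"]) simp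

lemma ig_comb: "(\<And>a. a \<in> A \<Longrightarrow> c a \<in> polyring m n) \<Longrightarrow> (\<Sum>a\<in>A. c a * a) \<in> IG m n A"
  unfolding ideal_gen_def by blast

lemma ig_add: assumes "p \<in> IG m n A" "q \<in> IG m n A" shows "p + q \<in> IG m n A"
proof -
  obtain c1 where c1: "\<forall>a\<in>A. c1 a \<in> polyring m n" "p = (\<Sum>a\<in>A. c1 a * a)" using assms(1) unfolding ideal_gen_def by blast
  obtain c2 where c2: "\<forall>a\<in>A. c2 a \<in> polyring m n" "q = (\<Sum>a\<in>A. c2 a * a)" using assms(2) unfolding ideal_gen_def by blast
  have "p + q = (\<Sum>a\<in>A. (c1 a + c2 a) * a)" by (simp add: c1 c2 sum.distrib distrib_right)
  then show ?thesis using c1 c2 by (auto intro!: ig_comb pr_add)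
qed

lemma ig_mult: assumes "r \<in> polyring m n" "p \<in> IG m n A" shows "r * p \<in> IG m n A"
proof -
  obtain c1 where c1: "\<forall>a\<in>A. c1 a \<in> polyring m n" "p = (\<Sum>a\<in>A. c1 a * a)" using assms(2) unfolding ideal_gen_def by blast
  have "r * p = (\<Sum>a\<in>A. (r * c1 a) * a)" by (simp add: c1 sum_distrib_left mult.assoc)
  then show ?thesis using c1 assms(1) by (auto intro!: ig_comb pr_mult)
qed

lemma ig_uminus: "p \<in> IG m n A \<Longrightarrow> - p \<in> IG m n A"
proof -
  assume "p \<in> IG m n A"
  then have "(-1) * p \<in> IG m n A" by (intro ig_mult pr_uminus pr_one)
  then show ?thesis by simp
qed

lemma ig_diff: "p \<in> IG m n A \<Longrightarrow> q \<in> IG m n A \<Longrightarrow> p - q \<in> IG m n A"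
proof -
  assume "p \<in> IG m n A" "q \<in> IG m n A"
  then have "p + (- q) \<in> IG m n A" by (intro ig_add ig_uminus)
  then show ?thesis by simp
qed

lemma ig_sum: "(\<And>s. s \<in> S \<Longrightarrow> p s \<in> IG m n A) \<Longrightarrow> sum p S \<in> IG m n A"
  by (induction S rule: infinite_finite_induct) (auto intro: ig_add ig_zero)

lemma ig_gen: assumes "finite A" "a \<in> A" shows "a \<in> IG m n A"
proof -
  have "(\<Sum>b\<in>A. (if b = a then 1 else 0) * b) = (\<Sum>b\<in>A. if b = a then b else 0)"
    by (rule sum.cong) auto
  also have "\<dots> = a" using assms by (simp add: sum.delta)
  finally have "a = (\<Sum>b\<in>A. (if b = a then 1 else 0) * b)" by simp
  moreover have "(\<Sum>b\<in>A. (if b = a then 1 else 0) * b) \<in> IG m n A"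
    by (rule ig_comb) simp
  ultimately show ?thesis by simp
qed

lemma ig_sub_R: assumes "A \<subseteq> polyring m n" shows "IG m n A \<subseteq> polyring m n"
  using assms unfolding ideal_gen_def by (auto intro!: pr_sum pr_mult)

definition lmd :: "'a::comm_ring_1 mpoly \<Rightarrow> mon \<Rightarrow> bool" where
  "lmd f \<mu> \<longleftrightarrow> (\<forall>\<nu>\<in>Poly_Mapping.keys (f - Poly_Mapping.single \<mu> 1). W \<nu> < W \<mu>)"

lemma lmd_lookup: assumes "lmd f \<mu>" shows "Poly_Mapping.lookup f \<mu> = 1"
proof -
  have "\<mu> \<notin> Poly_Mapping.keys (f - Poly_Mapping.single \<mu> 1)" using assms unfolding lmd_def by blast
  then show ?thesis by (simp add: in_keys_iff lookup_minus)
qed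

lemma lmd_key: "lmd (f::'a::comm_ring_1 mpoly) \<mu> \<Longrightarrow> \<mu> \<in> Poly_Mapping.keys f"
  using lmd_lookup[of f \<mu>] by (simp add: in_keys_iff)

lemma lmd_R: assumes "lmd f \<mu>" "f \<in> polyring m n"
  shows "Poly_Mapping.single \<mu> 1 \<in> polyring m n" "f - Poly_Mapping.single \<mu> 1 \<in> polyring m n"
proof -
  show 1: "Poly_Mapping.single \<mu> 1 \<in> polyring m n"
    using lmd_key[OF assms(1)] assms(2) by (intro pr_single) (auto simp: polyring_iff)
  show "f - Poly_Mapping.single \<mu> 1 \<in> polyring m n" using 1 assms(2) by (rule pr_diff[rotated])
qed

lemma lmd_keys_le: fixes f :: "'a::comm_ring_1 mpoly" assumes "lmd f \<mu>" "\<tau> \<in> Poly_Mapping.keys f" shows "W \<tau> \<le> W \<mu>"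
proof (cases "\<tau> = \<mu>")
  case False
  have "Poly_Mapping.lookup (f - Poly_Mapping.single \<mu> 1) \<tau> = Poly_Mapping.lookup f \<tau>"
    using False by (simp add: lookup_minus lookup_single)
  then have "\<tau> \<in> Poly_Mapping.keys (f - Poly_Mapping.single \<mu> 1)" using assms(2) by (simp add: in_keys_iff)
  then show ?thesis using assms(1) unfolding lmd_def by (meson less_imp_le)
qed simp

definition GA :: "nat \<Rightarrow> nat \<Rightarrow> 'a::comm_ring_1 mpoly set \<Rightarrow> ('a mpoly \<Rightarrow> mon) \<Rightarrow> bool" where
  "GA m n A lm \<longleftrightarrow> finite A \<and> (\<forall>f\<in>A. f \<in> polyring m n \<and> lmd f (lm f) \<and> 0 < W (lm f)) \<and>
     (\<forall>f\<in>A. \<forall>g\<in>A. f \<noteq> g \<longrightarrow> Poly_Mapping.keys (lm f) \<inter> Poly_Mapping.keys (lm g) = {})"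

lemma GA_mono: "GA m n B lm \<Longrightarrow> A \<subseteq> B \<Longrightarrow> GA m n A lm"
  unfolding GA_def by (meson finite_subset subsetD)

lemma keyA:
  fixes p :: "'a::comm_ring_1 mpoly"
  assumes "finite A" "\<forall>f\<in>A. Poly_Mapping.keys \<mu> \<inter> Poly_Mapping.keys (lm f) = {}"
    "p * Poly_Mapping.single \<mu> 1 = (\<Sum>f\<in>A. q f * Poly_Mapping.single (lm f) 1)"
    "\<nu> \<in> Poly_Mapping.keys p"
  shows "\<exists>f\<in>A. \<nu> = (\<nu> - lm f) + lm f"
proof -
  have "\<nu> + \<mu> \<in> Poly_Mapping.keys (p * Poly_Mapping.single \<mu> 1)"
    using assms(4) by (simp add: keys_mult_single1)
  then have "\<nu> + \<mu> \<in> Poly_Mapping.keys (\<Sum>f\<in>A. q f * Poly_Mapping.single (lm f) 1)"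
    using assms(3) by simp
  then have "\<nu> + \<mu> \<in> (\<Union>f\<in>A. Poly_Mapping.keys (q f * Poly_Mapping.single (lm f) 1))"
    using keys_sum[of "\<lambda>f. q f * Poly_Mapping.single (lm f) 1" A] by (rule subsetD[rotated])
  then obtain f where f0: "f \<in> A" "\<nu> + \<mu> \<in> Poly_Mapping.keys (q f * Poly_Mapping.single (lm f) 1)"
    by blast
  then have "\<nu> + \<mu> \<in> (\<lambda>\<nu>. \<nu> + lm f) ` Poly_Mapping.keys (q f)" by (simp only: keys_mult_single1)
  then obtain \<rho> where "\<nu> + \<mu> = \<rho> + lm f" by blast
  note f = f0(1) this
  then show ?thesis using divides_key[of \<mu> "lm f" \<nu> \<rho>] assms(2) by blast
qed

lemma decompA:
  fixes p :: "'a::comm_ring_1 mpoly"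
  assumes "finite A" "\<forall>\<nu>\<in>Poly_Mapping.keys p. \<exists>f\<in>A. \<nu> = (\<nu> - lm f) + lm f"
  shows "\<exists>b. (\<forall>f\<in>A. \<forall>\<rho>\<in>Poly_Mapping.keys (b f). \<rho> + lm f \<in> Poly_Mapping.keys p) \<and>
             p = (\<Sum>f\<in>A. b f * Poly_Mapping.single (lm f) 1)"
proof -
  define sel where "sel \<nu> = (SOME f. f \<in> A \<and> \<nu> = (\<nu> - lm f) + lm f)" for \<nu>
  have sel: "sel \<nu> \<in> A \<and> \<nu> = (\<nu> - lm (sel \<nu>)) + lm (sel \<nu>)" if "\<nu> \<in> Poly_Mapping.keys p" for \<nu>
  proof -
    have "\<exists>f. f \<in> A \<and> \<nu> = (\<nu> - lm f) + lm f" using assms(2) that by blast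
    then show ?thesis unfolding sel_def by (rule someI_ex)
  qed
  define b where "b f = (\<Sum>\<nu>\<in>{\<nu>\<in>Poly_Mapping.keys p. sel \<nu> = f}. Poly_Mapping.single (\<nu> - lm f) (Poly_Mapping.lookup p \<nu>))" for f
  have 1: "\<forall>f\<in>A. \<forall>\<rho>\<in>Poly_Mapping.keys (b f). \<rho> + lm f \<in> Poly_Mapping.keys p"
  proof (intro ballI)
    fix f \<rho> assume "f \<in> A" and rho: "\<rho> \<in> Poly_Mapping.keys (b f)"
    from rho have "\<rho> \<in> (\<Union>\<nu>\<in>{\<nu>\<in>Poly_Mapping.keys p. sel \<nu> = f}. Poly_Mapping.keys (Poly_Mapping.single (\<nu> - lm f) (Poly_Mapping.lookup p \<nu>)))"
      unfolding b_def by (rule subsetD[OF keys_sum])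
    then obtain \<nu> where nu: "\<nu> \<in> Poly_Mapping.keys p" "sel \<nu> = f" "\<rho> \<in> Poly_Mapping.keys (Poly_Mapping.single (\<nu> - lm f) (Poly_Mapping.lookup p \<nu>))"
      by blast
    then have "\<rho> = \<nu> - lm f" by (simp split: if_splits)
    then show "\<rho> + lm f \<in> Poly_Mapping.keys p" using sel[OF nu(1)] nu(1,2) by simp
  qed
  have 2: "b f * Poly_Mapping.single (lm f) 1 = (\<Sum>\<nu>\<in>{\<nu>\<in>Poly_Mapping.keys p. sel \<nu> = f}. Poly_Mapping.single \<nu> (Poly_Mapping.lookup p \<nu>))" for f
    unfolding b_def sum_distrib_right
  proof (rule sum.cong)
    fix \<nu> assume "\<nu> \<in> {\<nu> \<in> Poly_Mapping.keys p. sel \<nu> = f}"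
    then have "\<nu> - lm f + lm f = \<nu>" using sel by auto
    then show "Poly_Mapping.single (\<nu> - lm f) (Poly_Mapping.lookup p \<nu>) * Poly_Mapping.single (lm f) 1 =
          Poly_Mapping.single \<nu> (Poly_Mapping.lookup p \<nu>)" by (simp add: mult_single)
  qed simp
  have "(\<Sum>f\<in>A. b f * Poly_Mapping.single (lm f) 1) = (\<Sum>f\<in>A. \<Sum>\<nu>\<in>{\<nu>\<in>Poly_Mapping.keys p. sel \<nu> = f}. Poly_Mapping.single \<nu> (Poly_Mapping.lookup p \<nu>))"
    by (simp only: 2)
  also have "\<dots> = (\<Sum>\<nu>\<in>Poly_Mapping.keys p. Poly_Mapping.single \<nu> (Poly_Mapping.lookup p \<nu>))"
    by (rule sum.group) (use assms(1) sel in auto)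
  also have "\<dots> = p" by (rule poly_as_sum[symmetric])
  finally have "p = (\<Sum>f\<in>A. b f * Poly_Mapping.single (lm f) 1)" by simp
  then show ?thesis using 1 by blast
qed

lemma hcomp_mult_single:
  fixes c :: "'a::comm_ring_1 mpoly"
  shows "hcomp (\<lambda>\<nu>. W \<nu> = D) (c * Poly_Mapping.single \<mu> 1) = hcomp (\<lambda>\<nu>. W \<nu> + W \<mu> = D) c * Poly_Mapping.single \<mu> 1"
proof (rule poly_mapping_eqI)
  fix \<kappa>
  show "Poly_Mapping.lookup (hcomp (\<lambda>\<nu>. W \<nu> = D) (c * Poly_Mapping.single \<mu> 1)) \<kappa> =
        Poly_Mapping.lookup (hcomp (\<lambda>\<nu>. W \<nu> + W \<mu> = D) c * Poly_Mapping.single \<mu> 1) \<kappa>"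
  proof (cases "\<exists>\<nu>. \<kappa> = \<nu> + \<mu>")
    case True
    then obtain \<nu> where k: "\<kappa> = \<nu> + \<mu>" by blast
    show ?thesis by (simp add: k lookup_hcomp lookup_mult_single W_add)
  next
    case False
    then show ?thesis by (simp add: lookup_hcomp lookup_mult_single2)
  qed
qed

lemma keys_prod_bound:
  fixes p q :: "'a::comm_ring_1 mpoly"
  assumes "\<And>a b. a \<in> Poly_Mapping.keys p \<Longrightarrow> b \<in> Poly_Mapping.keys q \<Longrightarrow> P (a + b)"
    "\<nu> \<in> Poly_Mapping.keys (p * q)"
  shows "P \<nu>"
proof -
  obtain a b where "a \<in> Poly_Mapping.keys p" "b \<in> Poly_Mapping.keys q" "\<nu> = a + b"
    using keys_mult[of p q] assms(2) by blast
  then show ?thesis using assms(1) by simp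
qed

lemma lmd_tail: "lmd f \<mu> \<Longrightarrow> \<tau> \<in> Poly_Mapping.keys (f - Poly_Mapping.single \<mu> 1) \<Longrightarrow> W \<tau> < W \<mu>"
  unfolding lmd_def by blast

lemma hc_prod:
  fixes c f :: "'a::comm_ring_1 mpoly"
  assumes "lmd f \<mu>" "\<forall>\<nu>\<in>Poly_Mapping.keys c. W \<nu> + W \<mu> \<le> D"
  shows "hcomp (\<lambda>\<nu>. W \<nu> = D) (c * f) = hcomp (\<lambda>\<nu>. W \<nu> + W \<mu> = D) c * Poly_Mapping.single \<mu> 1"
proof -
  have e: "c * f = c * Poly_Mapping.single \<mu> 1 + c * (f - Poly_Mapping.single \<mu> 1)"
    by (simp add: algebra_simps)
  have "hcomp (\<lambda>\<nu>. W \<nu> = D) (c * (f - Poly_Mapping.single \<mu> 1)) = 0"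
  proof (rule hcomp_none)
    fix \<kappa> assume "\<kappa> \<in> Poly_Mapping.keys (c * (f - Poly_Mapping.single \<mu> 1))"
    then show "\<not> W \<kappa> = D"
    proof (rule keys_prod_bound[rotated])
      fix a b assume "a \<in> Poly_Mapping.keys c" "b \<in> Poly_Mapping.keys (f - Poly_Mapping.single \<mu> 1)"
      then have "W a + W \<mu> \<le> D" "W b < W \<mu>" using assms lmd_tail by auto
      then show "\<not> W (a + b) = D" by (simp add: W_add)
    qed
  qed
  then show ?thesis by (simp add: e hcomp_add hcomp_mult_single)
qed

lemma keys_sum_bound:
  assumes "\<And>i \<nu>. i \<in> S \<Longrightarrow> \<nu> \<in> Poly_Mapping.keys (f i) \<Longrightarrow> P \<nu>" "\<nu> \<in> Poly_Mapping.keys (sum f S)"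
  shows "P \<nu>"
  using keys_sum[of f S] assms by blast

lemma GA_props:
  assumes "GA m n A lm" "f \<in> A"
  shows "f \<in> polyring m n" "lmd f (lm f)" "0 < W (lm f)"
    "Poly_Mapping.single (lm f) 1 \<in> polyring m n" "f - Poly_Mapping.single (lm f) 1 \<in> polyring m n"
  using assms unfolding GA_def by (auto intro: lmd_R)

lemma syz:
  fixes a :: "'a::comm_ring_1 mpoly \<Rightarrow> 'a mpoly"
  assumes "finite A" "GA m n A lm"
    "\<forall>f\<in>A. a f \<in> polyring m n \<and> (\<forall>\<nu>\<in>Poly_Mapping.keys (a f). W \<nu> + W (lm f) = D)"
    "(\<Sum>f\<in>A. a f * Poly_Mapping.single (lm f) 1) = 0"
  shows "\<exists>c. (\<forall>f\<in>A. c f \<in> polyring m n \<and> (\<forall>\<nu>\<in>Poly_Mapping.keys (c f). W \<nu> + W (lm f) < D)) \<and>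
             (\<Sum>f\<in>A. a f * f) = (\<Sum>f\<in>A. c f * f)"
  using assms
proof (induction A arbitrary: a rule: finite_induct)
  case empty
  show ?case by (rule exI[of _ "\<lambda>_. 0"]) simp
next
  case (insert k A a)
  define M where "M f = (Poly_Mapping.single (lm f) 1 :: 'a mpoly)" for f
  define T where "T f = f - M f" for f
  have GAA: "GA m n A lm" using insert(4) by (rule GA_mono) auto
  note kp = GA_props[OF insert(4) insertI1]
  have kR: "k \<in> polyring m n" "lmd k (lm k)" "M k \<in> polyring m n" "T k \<in> polyring m n"
    using kp unfolding M_def T_def by auto
  have fp: "f \<in> polyring m n" "lmd f (lm f)" "M f \<in> polyring m n" "T f \<in> polyring m n" if "f \<in> A" for f
    using GA_props[OF insert(4), of f] that unfolding M_def T_def by auto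
  have cop: "Poly_Mapping.keys (lm k) \<inter> Poly_Mapping.keys (lm f) = {}" if "f \<in> A" for f
  proof -
    have "\<forall>f\<in>insert k A. \<forall>g\<in>insert k A. f \<noteq> g \<longrightarrow> Poly_Mapping.keys (lm f) \<inter> Poly_Mapping.keys (lm g) = {}"
      using insert(4) unfolding GA_def by blast
    moreover have "k \<noteq> f" using insert(2) that by blast
    ultimately show ?thesis using that by blast
  qed
  have ak: "a k \<in> polyring m n" "\<forall>\<nu>\<in>Poly_Mapping.keys (a k). W \<nu> + W (lm k) = D"
    using insert(5) by auto
  have h0: "a k * M k + (\<Sum>f\<in>A. a f * M f) = 0"
    using insert(6) insert(1,2) unfolding M_def by simp
  have h1: "a k * Poly_Mapping.single (lm k) 1 = (\<Sum>f\<in>A. (- a f) * Poly_Mapping.single (lm f) 1)"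
  proof -
    have "a k * M k = - (\<Sum>f\<in>A. a f * M f)" using h0 by (simp add: eq_neg_iff_add_eq_0)
    also have "\<dots> = (\<Sum>f\<in>A. (- a f) * M f)" by (simp add: sum_negf)
    finally show ?thesis unfolding M_def .
  qed
  have div: "\<forall>\<nu>\<in>Poly_Mapping.keys (a k). \<exists>f\<in>A. \<nu> = (\<nu> - lm f) + lm f"
    using keyA[OF insert(1) _ h1] cop by blast
  obtain b where b1: "\<forall>f\<in>A. \<forall>\<rho>\<in>Poly_Mapping.keys (b f). \<rho> + lm f \<in> Poly_Mapping.keys (a k)"
    and b2: "a k = (\<Sum>f\<in>A. b f * M f)"
    using decompA[OF insert(1) div] unfolding M_def by blast
  have bW: "W \<rho> + W (lm f) + W (lm k) = D" if "f \<in> A" "\<rho> \<in> Poly_Mapping.keys (b f)" for f \<rho>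
  proof -
    have "\<rho> + lm f \<in> Poly_Mapping.keys (a k)" using b1 that by blast
    then have "W (\<rho> + lm f) + W (lm k) = D" using ak(2) by blast
    then show ?thesis by (simp add: W_add)
  qed
  have bR: "b f \<in> polyring m n" if "f \<in> A" for f
    unfolding polyring_iff
  proof
    fix \<rho> assume "\<rho> \<in> Poly_Mapping.keys (b f)"
    then have "\<rho> + lm f \<in> Poly_Mapping.keys (a k)" using b1 that by blast
    then have "Poly_Mapping.keys (\<rho> + lm f) \<subseteq> {1..m} \<times> {1..n}" using ak(1) unfolding polyring_iff by blast
    then show "Poly_Mapping.keys \<rho> \<subseteq> {1..m} \<times> {1..n}" by (simp add: keys_add_nat)
  qed
  define a' where "a' f = a f + b f * M k" for f
  have a'1: "\<forall>f\<in>A. a' f \<in> polyring m n \<and> (\<forall>\<nu>\<in>Poly_Mapping.keys (a' f). W \<nu> + W (lm f) = D)"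
  proof
    fix f assume f: "f \<in> A"
    have afp: "a f \<in> polyring m n" "\<forall>\<nu>\<in>Poly_Mapping.keys (a f). W \<nu> + W (lm f) = D"
      using insert(5) f by auto
    show "a' f \<in> polyring m n \<and> (\<forall>\<nu>\<in>Poly_Mapping.keys (a' f). W \<nu> + W (lm f) = D)"
    proof
      show "a' f \<in> polyring m n" unfolding a'_def using afp bR[OF f] kR by (intro pr_add pr_mult)
      show "\<forall>\<nu>\<in>Poly_Mapping.keys (a' f). W \<nu> + W (lm f) = D"
      proof
        fix \<nu> assume "\<nu> \<in> Poly_Mapping.keys (a' f)"
        then have "\<nu> \<in> Poly_Mapping.keys (a f) \<or> \<nu> \<in> Poly_Mapping.keys (b f * M k)"
          unfolding a'_def using keys_add[of "a f" "b f * M k"] by blast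
        then show "W \<nu> + W (lm f) = D"
        proof
          assume "\<nu> \<in> Poly_Mapping.keys (b f * M k)"
          then obtain \<rho> where r: "\<rho> \<in> Poly_Mapping.keys (b f)" "\<nu> = \<rho> + lm k"
            unfolding M_def keys_mult_single1 by blast
          have "W \<rho> + W (lm f) + W (lm k) = D" using bW[OF f r(1)] .
          then show ?thesis using r(2) by (simp add: W_add)
        qed (use afp in blast)
      qed
    qed
  qed
  have a'2: "(\<Sum>f\<in>A. a' f * Poly_Mapping.single (lm f) 1) = 0"
  proof -
    have "(\<Sum>f\<in>A. a' f * M f) = (\<Sum>f\<in>A. a f * M f + (b f * M f) * M k)"
      by (rule sum.cong) (simp_all add: a'_def algebra_simps)
    also have "\<dots> = (\<Sum>f\<in>A. a f * M f) + (\<Sum>f\<in>A. b f * M f) * M k"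
      by (simp add: sum.distrib sum_distrib_right)
    also have "\<dots> = 0" using h0 b2 by (simp add: algebra_simps)
    finally show ?thesis unfolding M_def .
  qed
  obtain c' where c'1: "\<forall>f\<in>A. c' f \<in> polyring m n \<and> (\<forall>\<nu>\<in>Poly_Mapping.keys (c' f). W \<nu> + W (lm f) < D)"
    and c'2: "(\<Sum>f\<in>A. a' f * f) = (\<Sum>f\<in>A. c' f * f)"
    using insert(3)[OF GAA a'1 a'2] by blast
  define c where "c f = (if f = k then - (\<Sum>g\<in>A. b g * T g) else c' f + b f * T k)" for f
  have cA: "c f = c' f + b f * T k" if "f \<in> A" for f using that insert(2) unfolding c_def by auto
  have ck: "c k = - (\<Sum>g\<in>A. b g * T g)" unfolding c_def by simp
  have bnd: "\<forall>f\<in>insert k A. c f \<in> polyring m n \<and> (\<forall>\<nu>\<in>Poly_Mapping.keys (c f). W \<nu> + W (lm f) < D)"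
  proof
    fix f assume "f \<in> insert k A"
    then consider "f = k" | "f \<in> A" by blast
    then show "c f \<in> polyring m n \<and> (\<forall>\<nu>\<in>Poly_Mapping.keys (c f). W \<nu> + W (lm f) < D)"
    proof cases
      case 1
      have R: "c f \<in> polyring m n" unfolding 1 ck using bR fp
        by (intro pr_uminus pr_sum pr_mult) auto
      have "W \<nu> + W (lm k) < D" if \<nu>: "\<nu> \<in> Poly_Mapping.keys (\<Sum>g\<in>A. b g * T g)" for \<nu>
      proof (rule keys_sum_bound[OF _ \<nu>])
        fix g \<kappa> assume g: "g \<in> A" and kap: "\<kappa> \<in> Poly_Mapping.keys (b g * T g)"
        from kap show "W \<kappa> + W (lm k) < D"
        proof (rule keys_prod_bound[rotated])
          fix \<rho> \<tau> assume "\<rho> \<in> Poly_Mapping.keys (b g)" "\<tau> \<in> Poly_Mapping.keys (T g)"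
          then have "W \<rho> + W (lm g) + W (lm k) = D" "W \<tau> < W (lm g)"
            using bW[OF g] lmd_tail[OF fp(2)[OF g]] unfolding T_def M_def by auto
          then show "W (\<rho> + \<tau>) + W (lm k) < D" by (simp add: W_add)
        qed
      qed
      then show ?thesis using R unfolding 1 ck by (simp add: keys_uminus')
    next
      case 2
      have R: "c f \<in> polyring m n" unfolding cA[OF 2] using c'1 2 bR[OF 2] kR
        by (intro pr_add pr_mult) auto
      have "W \<nu> + W (lm f) < D" if \<nu>: "\<nu> \<in> Poly_Mapping.keys (c f)" for \<nu>
      proof -
        from \<nu> have "\<nu> \<in> Poly_Mapping.keys (c' f) \<or> \<nu> \<in> Poly_Mapping.keys (b f * T k)"
          unfolding cA[OF 2] using keys_add[of "c' f" "b f * T k"] by blast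
        then show ?thesis
        proof
          assume "\<nu> \<in> Poly_Mapping.keys (b f * T k)"
          then show ?thesis
          proof (rule keys_prod_bound[rotated])
            fix \<rho> \<tau> assume "\<rho> \<in> Poly_Mapping.keys (b f)" "\<tau> \<in> Poly_Mapping.keys (T k)"
            then have "W \<rho> + W (lm f) + W (lm k) = D" "W \<tau> < W (lm k)"
              using bW[OF 2] lmd_tail[OF kR(2)] unfolding T_def M_def by auto
            then show "W (\<rho> + \<tau>) + W (lm f) < D" by (simp add: W_add)
          qed
        qed (use c'1 2 in blast)
      qed
      then show ?thesis using R by blast
    qed
  qed
  have E: "a k * k = (\<Sum>f\<in>A. (b f * M k) * f) + (\<Sum>f\<in>A. (b f * T k) * f) - (\<Sum>f\<in>A. b f * T f) * k"
  proof -
    have "a k * k = (\<Sum>f\<in>A. b f * M f * k)" by (simp add: b2 sum_distrib_right)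
    also have "\<dots> = (\<Sum>f\<in>A. (b f * M k) * f + (b f * T k) * f - (b f * T f) * k)"
      by (rule sum.cong) (simp_all add: T_def algebra_simps)
    also have "\<dots> = (\<Sum>f\<in>A. (b f * M k) * f) + (\<Sum>f\<in>A. (b f * T k) * f) - (\<Sum>f\<in>A. b f * T f) * k"
      by (simp add: sum.distrib sum_subtractf sum_distrib_right)
    finally show ?thesis .
  qed
  have "(\<Sum>f\<in>insert k A. a f * f) = a k * k + (\<Sum>f\<in>A. a f * f)"
    using insert(1,2) by simp
  also have "\<dots> = (\<Sum>f\<in>A. a' f * f) + (\<Sum>f\<in>A. (b f * T k) * f) - (\<Sum>f\<in>A. b f * T f) * k"
    unfolding E a'_def by (simp add: algebra_simps sum.distrib)
  also have "\<dots> = (\<Sum>f\<in>A. c' f * f) + (\<Sum>f\<in>A. (b f * T k) * f) + c k * k"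
    unfolding c'2 ck by simp
  also have "\<dots> = (\<Sum>f\<in>A. c f * f) + c k * k"
    by (simp add: cA sum.distrib algebra_simps)
  also have "\<dots> = (\<Sum>f\<in>insert k A. c f * f)"
    using insert(1,2) by simp
  finally show ?case using bnd by blast
qed

lemma desc:
  fixes c :: "'a::comm_ring_1 mpoly \<Rightarrow> 'a mpoly"
  assumes GA: "GA m n A lm"
    and cb: "\<forall>f\<in>A. c f \<in> polyring m n \<and> (\<forall>\<nu>\<in>Poly_Mapping.keys (c f). W \<nu> + W (lm f) \<le> D)"
    and h: "h = (\<Sum>f\<in>A. c f * f)" and hk: "\<forall>\<nu>\<in>Poly_Mapping.keys h. W \<nu> < D"
  shows "\<exists>c'. (\<forall>f\<in>A. c' f \<in> polyring m n \<and> (\<forall>\<nu>\<in>Poly_Mapping.keys (c' f). W \<nu> + W (lm f) < D)) \<and>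
             h = (\<Sum>f\<in>A. c' f * f)"
proof -
  have fin: "finite A" using GA unfolding GA_def by blast
  define a where "a f = hcomp (\<lambda>\<nu>. W \<nu> + W (lm f) = D) (c f)" for f
  define r where "r f = hcomp (\<lambda>\<nu>. \<not> (W \<nu> + W (lm f) = D)) (c f)" for f
  have cs: "c f = a f + r f" for f unfolding a_def r_def by (rule hcomp_split)
  have "hcomp (\<lambda>\<nu>. W \<nu> = D) h = 0" by (rule hcomp_none) (use hk in auto)
  moreover have "hcomp (\<lambda>\<nu>. W \<nu> = D) h = (\<Sum>f\<in>A. a f * Poly_Mapping.single (lm f) 1)"
    unfolding h hcomp_sum
  proof (rule sum.cong)
    fix f assume f: "f \<in> A"
    show "hcomp (\<lambda>\<nu>. W \<nu> = D) (c f * f) = a f * Poly_Mapping.single (lm f) 1"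
      unfolding a_def by (rule hc_prod) (use GA_props[OF GA f] cb f in auto)
  qed simp
  ultimately have z: "(\<Sum>f\<in>A. a f * Poly_Mapping.single (lm f) 1) = 0" by simp
  have ab: "\<forall>f\<in>A. a f \<in> polyring m n \<and> (\<forall>\<nu>\<in>Poly_Mapping.keys (a f). W \<nu> + W (lm f) = D)"
    using cb unfolding a_def by (auto intro: pr_hcomp simp: keys_hcomp)
  obtain c'' where c''1: "\<forall>f\<in>A. c'' f \<in> polyring m n \<and> (\<forall>\<nu>\<in>Poly_Mapping.keys (c'' f). W \<nu> + W (lm f) < D)"
    and c''2: "(\<Sum>f\<in>A. a f * f) = (\<Sum>f\<in>A. c'' f * f)"
    using syz[OF fin GA ab z] by blast
  have "h = (\<Sum>f\<in>A. a f * f + r f * f)" unfolding h cs by (simp add: distrib_right)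
  also have "\<dots> = (\<Sum>f\<in>A. a f * f) + (\<Sum>f\<in>A. r f * f)" by (simp add: sum.distrib)
  also have "\<dots> = (\<Sum>f\<in>A. (c'' f + r f) * f)" unfolding c''2 by (simp add: sum.distrib distrib_right)
  finally have e: "h = (\<Sum>f\<in>A. (c'' f + r f) * f)" .
  have "\<forall>f\<in>A. c'' f + r f \<in> polyring m n \<and> (\<forall>\<nu>\<in>Poly_Mapping.keys (c'' f + r f). W \<nu> + W (lm f) < D)"
  proof
    fix f assume f: "f \<in> A"
    have rR: "r f \<in> polyring m n" using cb f unfolding r_def by (auto intro: pr_hcomp)
    have rk: "W \<nu> + W (lm f) < D" if "\<nu> \<in> Poly_Mapping.keys (r f)" for \<nu>
    proof -
      have "\<nu> \<in> Poly_Mapping.keys (c f)" "W \<nu> + W (lm f) \<noteq> D" using that unfolding r_def keys_hcomp by auto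
      then show ?thesis using cb f by force
    qed
    show "c'' f + r f \<in> polyring m n \<and> (\<forall>\<nu>\<in>Poly_Mapping.keys (c'' f + r f). W \<nu> + W (lm f) < D)"
    proof
      show "c'' f + r f \<in> polyring m n" using c''1 f rR by (intro pr_add) auto
      show "\<forall>\<nu>\<in>Poly_Mapping.keys (c'' f + r f). W \<nu> + W (lm f) < D"
      proof
        fix \<nu> assume "\<nu> \<in> Poly_Mapping.keys (c'' f + r f)"
        then have "\<nu> \<in> Poly_Mapping.keys (c'' f) \<or> \<nu> \<in> Poly_Mapping.keys (r f)"
          using keys_add[of "c'' f" "r f"] by blast
        then show "W \<nu> + W (lm f) < D" using rk c''1 f by blast
      qed
    qed
  qed
  then show ?thesis by (rule_tac x="\<lambda>f. c'' f + r f" in exI) (use e in simp)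
qed

lemma rep_full:
  fixes h :: "'a::comm_ring_1 mpoly"
  assumes GA: "GA m n A lm" and hI: "h \<in> IG m n A" and hk: "\<forall>\<nu>\<in>Poly_Mapping.keys h. W \<nu> \<le> E"
  shows "\<exists>c. (\<forall>f\<in>A. c f \<in> polyring m n \<and> (\<forall>\<nu>\<in>Poly_Mapping.keys (c f). W \<nu> + W (lm f) \<le> E)) \<and>
             h = (\<Sum>f\<in>A. c f * f)"
proof -
  have fin: "finite A" using GA unfolding GA_def by blast
  have step: "(\<exists>c. (\<forall>f\<in>A. c f \<in> polyring m n \<and> (\<forall>\<nu>\<in>Poly_Mapping.keys (c f). W \<nu> + W (lm f) \<le> E + k)) \<and>
             h = (\<Sum>f\<in>A. c f * f)) \<longrightarrow>
        (\<exists>c. (\<forall>f\<in>A. c f \<in> polyring m n \<and> (\<forall>\<nu>\<in>Poly_Mapping.keys (c f). W \<nu> + W (lm f) \<le> E)) \<and>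
             h = (\<Sum>f\<in>A. c f * f))" for k
  proof (induction k)
    case 0 then show ?case by simp
  next
    case (Suc k)
    show ?case
    proof
      assume "\<exists>c. (\<forall>f\<in>A. c f \<in> polyring m n \<and> (\<forall>\<nu>\<in>Poly_Mapping.keys (c f). W \<nu> + W (lm f) \<le> E + Suc k)) \<and>
             h = (\<Sum>f\<in>A. c f * f)"
      then obtain c where c: "\<forall>f\<in>A. c f \<in> polyring m n \<and> (\<forall>\<nu>\<in>Poly_Mapping.keys (c f). W \<nu> + W (lm f) \<le> E + Suc k)"
        "h = (\<Sum>f\<in>A. c f * f)" by blast
      have "\<forall>\<nu>\<in>Poly_Mapping.keys h. W \<nu> < E + Suc k" using hk by fastforce
      from desc[OF GA c(1) c(2) this] obtain c' where
        c': "\<forall>f\<in>A. c' f \<in> polyring m n \<and> (\<forall>\<nu>\<in>Poly_Mapping.keys (c' f). W \<nu> + W (lm f) < E + Suc k)"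
        "h = (\<Sum>f\<in>A. c' f * f)" by blast
      have "\<forall>f\<in>A. c' f \<in> polyring m n \<and> (\<forall>\<nu>\<in>Poly_Mapping.keys (c' f). W \<nu> + W (lm f) \<le> E + k)"
        using c'(1) by fastforce
      then show "\<exists>c. (\<forall>f\<in>A. c f \<in> polyring m n \<and> (\<forall>\<nu>\<in>Poly_Mapping.keys (c f). W \<nu> + W (lm f) \<le> E)) \<and>
             h = (\<Sum>f\<in>A. c f * f)" using Suc c'(2) by blast
    qed
  qed
  obtain c0 where c0: "\<forall>f\<in>A. c0 f \<in> polyring m n" "h = (\<Sum>f\<in>A. c0 f * f)"
    using hI unfolding ideal_gen_def by blast
  define K where "K = (\<Sum>f\<in>A. \<Sum>\<nu>\<in>Poly_Mapping.keys (c0 f). W \<nu> + W (lm f))"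
  have "W \<nu> + W (lm f) \<le> E + K" if "f \<in> A" "\<nu> \<in> Poly_Mapping.keys (c0 f)" for f \<nu>
  proof -
    have "W \<nu> + W (lm f) \<le> (\<Sum>\<nu>\<in>Poly_Mapping.keys (c0 f). W \<nu> + W (lm f))"
      using that(2) by (intro member_le_sum) auto
    also have "\<dots> \<le> K" unfolding K_def using that(1) fin by (intro member_le_sum) auto
    finally show ?thesis by simp
  qed
  then have "\<exists>c. (\<forall>f\<in>A. c f \<in> polyring m n \<and> (\<forall>\<nu>\<in>Poly_Mapping.keys (c f). W \<nu> + W (lm f) \<le> E + K)) \<and>
             h = (\<Sum>f\<in>A. c f * f)" using c0 by blast
  then show ?thesis using step[of K] by blast
qed

lemma reg:
  fixes k :: "'a::comm_ring_1 mpoly"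
  assumes GA: "GA m n (insert k A) lm" and kA: "k \<notin> A"
  shows "g \<in> polyring m n \<Longrightarrow> g * k \<in> IG m n A \<Longrightarrow> (\<forall>\<nu>\<in>Poly_Mapping.keys g. W \<nu> < d) \<Longrightarrow> g \<in> IG m n A"
proof (induction d arbitrary: g)
  case 0
  then have "g = 0" by (metis empty_iff keys_eq_empty less_nat_zero_code subsetI subset_empty)
  then show ?case by (simp add: ig_zero)
next
  case (Suc d g)
  define M where "M f = (Poly_Mapping.single (lm f) 1 :: 'a mpoly)" for f
  define T where "T f = f - M f" for f
  have GAA: "GA m n A lm" using GA by (rule GA_mono) auto
  have fin: "finite A" using GAA unfolding GA_def by blast
  note kp = GA_props[OF GA insertI1]
  have fp: "f \<in> polyring m n" "lmd f (lm f)" "M f \<in> polyring m n" "T f \<in> polyring m n" if "f \<in> A" for f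
    using GA_props[OF GA, of f] that unfolding M_def T_def by auto
  have cop: "Poly_Mapping.keys (lm k) \<inter> Poly_Mapping.keys (lm f) = {}" if "f \<in> A" for f
  proof -
    have "\<forall>f\<in>insert k A. \<forall>g\<in>insert k A. f \<noteq> g \<longrightarrow> Poly_Mapping.keys (lm f) \<inter> Poly_Mapping.keys (lm g) = {}"
      using GA unfolding GA_def by blast
    moreover have "k \<noteq> f" using kA that by blast
    ultimately show ?thesis using that by blast
  qed
  define Tg where "Tg = hcomp (\<lambda>\<nu>. W \<nu> = d) g"
  define E where "E = d + W (lm k)"
  have gle: "W \<nu> + W (lm k) \<le> E" if "\<nu> \<in> Poly_Mapping.keys g" for \<nu>
    using Suc.prems(3) that unfolding E_def by fastforce
  have hk: "\<forall>\<nu>\<in>Poly_Mapping.keys (g * k). W \<nu> \<le> E"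
  proof
    fix \<nu> assume "\<nu> \<in> Poly_Mapping.keys (g * k)"
    then show "W \<nu> \<le> E"
    proof (rule keys_prod_bound[rotated])
      fix a b assume "a \<in> Poly_Mapping.keys g" "b \<in> Poly_Mapping.keys k"
      then have "W a + W (lm k) \<le> E" "W b \<le> W (lm k)" using gle lmd_keys_le[OF kp(2)] by auto
      then show "W (a + b) \<le> E" by (simp add: W_add)
    qed
  qed
  obtain c where c1: "\<forall>f\<in>A. c f \<in> polyring m n \<and> (\<forall>\<nu>\<in>Poly_Mapping.keys (c f). W \<nu> + W (lm f) \<le> E)"
    and c2: "g * k = (\<Sum>f\<in>A. c f * f)"
    using rep_full[OF GAA Suc.prems(2) hk] by blast
  define a where "a f = hcomp (\<lambda>\<nu>. W \<nu> + W (lm f) = E) (c f)" for f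
  have "hcomp (\<lambda>\<nu>. W \<nu> = E) (g * k) = hcomp (\<lambda>\<nu>. W \<nu> + W (lm k) = E) g * M k"
    unfolding M_def by (rule hc_prod[OF kp(2)]) (use gle in blast)
  also have "hcomp (\<lambda>\<nu>. W \<nu> + W (lm k) = E) g = Tg"
    unfolding Tg_def E_def by simp
  finally have e1: "hcomp (\<lambda>\<nu>. W \<nu> = E) (g * k) = Tg * M k" .
  have e2: "hcomp (\<lambda>\<nu>. W \<nu> = E) (g * k) = (\<Sum>f\<in>A. a f * M f)"
    unfolding c2 hcomp_sum
  proof (rule sum.cong)
    fix f assume f: "f \<in> A"
    show "hcomp (\<lambda>\<nu>. W \<nu> = E) (c f * f) = a f * M f"
      unfolding a_def M_def by (rule hc_prod) (use fp[OF f] c1 f in auto)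
  qed simp
  have div: "\<forall>\<nu>\<in>Poly_Mapping.keys Tg. \<exists>f\<in>A. \<nu> = (\<nu> - lm f) + lm f"
    using keyA[OF fin, where \<mu>="lm k" and p=Tg and q=a and lm=lm] e1 e2 cop unfolding M_def by auto
  obtain b where b1: "\<forall>f\<in>A. \<forall>\<rho>\<in>Poly_Mapping.keys (b f). \<rho> + lm f \<in> Poly_Mapping.keys Tg"
    and b2: "Tg = (\<Sum>f\<in>A. b f * M f)"
    using decompA[OF fin div] unfolding M_def by blast
  have TgR: "Tg \<in> polyring m n" unfolding Tg_def by (rule pr_hcomp) (rule Suc.prems(1))
  have bR: "b f \<in> polyring m n" if "f \<in> A" for f
    unfolding polyring_iff
  proof
    fix \<rho> assume "\<rho> \<in> Poly_Mapping.keys (b f)"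
    then have "\<rho> + lm f \<in> Poly_Mapping.keys Tg" using b1 that by blast
    then have "Poly_Mapping.keys (\<rho> + lm f) \<subseteq> {1..m} \<times> {1..n}" using TgR unfolding polyring_iff by blast
    then show "Poly_Mapping.keys \<rho> \<subseteq> {1..m} \<times> {1..n}" by (simp add: keys_add_nat)
  qed
  have bW: "W \<rho> + W (lm f) = d" if "f \<in> A" "\<rho> \<in> Poly_Mapping.keys (b f)" for f \<rho>
  proof -
    have "\<rho> + lm f \<in> Poly_Mapping.keys Tg" using b1 that by blast
    then have "W (\<rho> + lm f) = d" unfolding Tg_def keys_hcomp by blast
    then show ?thesis by (simp add: W_add)
  qed
  define g2 where "g2 = g - (\<Sum>f\<in>A. b f * f)"
  have g2R: "g2 \<in> polyring m n" unfolding g2_def using Suc.prems(1) bR fp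
    by (intro pr_diff pr_sum pr_mult) auto
  have "(\<Sum>f\<in>A. b f * f) * k = (\<Sum>f\<in>A. (b f * k) * f)"
    unfolding sum_distrib_right by (rule sum.cong) (simp_all add: mult_ac)
  then have "g2 * k = g * k - (\<Sum>f\<in>A. (b f * k) * f)"
    unfolding g2_def by (simp add: left_diff_distrib)
  moreover have "(\<Sum>f\<in>A. (b f * k) * f) \<in> IG m n A"
    using bR kp(1) by (intro ig_comb pr_mult) auto
  ultimately have g2I: "g2 * k \<in> IG m n A" using Suc.prems(2) by (simp add: ig_diff)
  have g2e: "g2 = hcomp (\<lambda>\<nu>. \<not> W \<nu> = d) g - (\<Sum>f\<in>A. b f * T f)"
  proof -
    have "(\<Sum>f\<in>A. b f * f) = (\<Sum>f\<in>A. b f * M f + b f * T f)"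
      by (rule sum.cong) (simp_all add: T_def algebra_simps)
    also have "\<dots> = Tg + (\<Sum>f\<in>A. b f * T f)" by (simp add: sum.distrib b2)
    finally have "(\<Sum>f\<in>A. b f * f) = Tg + (\<Sum>f\<in>A. b f * T f)" .
    moreover have "g = Tg + hcomp (\<lambda>\<nu>. \<not> W \<nu> = d) g" unfolding Tg_def by (rule hcomp_split)
    ultimately show ?thesis unfolding g2_def by (simp add: algebra_simps)
  qed
  have g2k: "\<forall>\<nu>\<in>Poly_Mapping.keys g2. W \<nu> < d"
  proof
    fix \<nu> assume "\<nu> \<in> Poly_Mapping.keys g2"
    then have "\<nu> \<in> Poly_Mapping.keys (hcomp (\<lambda>\<nu>. \<not> W \<nu> = d) g) \<or> \<nu> \<in> Poly_Mapping.keys (\<Sum>f\<in>A. b f * T f)"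
      unfolding g2e using keys_diff_sub[of "hcomp (\<lambda>\<nu>. \<not> W \<nu> = d) g" "\<Sum>f\<in>A. b f * T f"] by blast
    then show "W \<nu> < d"
    proof
      assume "\<nu> \<in> Poly_Mapping.keys (hcomp (\<lambda>\<nu>. \<not> W \<nu> = d) g)"
      then show ?thesis using Suc.prems(3) unfolding keys_hcomp by fastforce
    next
      assume nu: "\<nu> \<in> Poly_Mapping.keys (\<Sum>f\<in>A. b f * T f)"
      show ?thesis
      proof (rule keys_sum_bound[OF _ nu])
        fix f \<kappa> assume f: "f \<in> A" and kap: "\<kappa> \<in> Poly_Mapping.keys (b f * T f)"
        from kap show "W \<kappa> < d"
        proof (rule keys_prod_bound[rotated])
          fix \<rho> \<tau> assume "\<rho> \<in> Poly_Mapping.keys (b f)" "\<tau> \<in> Poly_Mapping.keys (T f)"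
          then have "W \<rho> + W (lm f) = d" "W \<tau> < W (lm f)"
            using bW[OF f] lmd_tail[OF fp(2)[OF f]] unfolding T_def M_def by auto
          then show "W (\<rho> + \<tau>) < d" by (simp add: W_add)
        qed
      qed
    qed
  qed
  have "g2 \<in> IG m n A" using Suc.IH[OF g2R g2I g2k] .
  moreover have "(\<Sum>f\<in>A. b f * f) \<in> IG m n A" using bR by (intro ig_comb) auto
  ultimately have "g2 + (\<Sum>f\<in>A. b f * f) \<in> IG m n A" by (rule ig_add)
  then show ?case unfolding g2_def by simp
qed

lemma not_in_take: "distinct xs \<Longrightarrow> i < length xs \<Longrightarrow> xs ! i \<notin> set (take i xs)"
  by (metis distinct_take id_take_nth_drop not_distinct_conv_prefix)

lemma regseq:
  fixes fs :: "'a::comm_ring_1 mpoly list"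
  assumes GA: "GA m n (set fs) lm" and dist: "distinct fs"
  shows "regular_sequence (polyring m n) fs"
  unfolding regular_sequence_def
proof (intro conjI allI impI ballI)
  show "set fs \<subseteq> polyring m n" using GA unfolding GA_def by blast
  show "IG m n (set fs) \<noteq> polyring m n"
  proof
    assume "IG m n (set fs) = polyring m n"
    then have "1 \<in> IG m n (set fs)" by simp
    from rep_full[OF GA this, of 0] obtain c where
      c: "\<forall>f\<in>set fs. c f \<in> polyring m n \<and> (\<forall>\<nu>\<in>Poly_Mapping.keys (c f). W \<nu> + W (lm f) \<le> 0)"
      "1 = (\<Sum>f\<in>set fs. c f * f)" by auto
    have "c f = 0" if "f \<in> set fs" for f
    proof -
      have "0 < W (lm f)" using GA that unfolding GA_def by blast
      then have "Poly_Mapping.keys (c f) = {}" using c(1) that by fastforce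
      then show ?thesis by simp
    qed
    then have "(1::'a mpoly) = 0" using c(2) by simp
    then show False by simp
  qed
  fix i g assume i: "i < length fs" and g: "g \<in> polyring m n" and gk: "g * fs ! i \<in> IG m n (set (take i fs))"
  have GA2: "GA m n (insert (fs ! i) (set (take i fs))) lm"
    using GA by (rule GA_mono) (use i in \<open>auto dest: in_set_takeD\<close>)
  have "\<forall>\<nu>\<in>Poly_Mapping.keys g. W \<nu> < Suc (\<Sum>\<nu>\<in>Poly_Mapping.keys g. W \<nu>)"
    by (simp add: le_imp_less_Suc member_le_sum)
  then show "g \<in> IG m n (set (take i fs))"
    using reg[OF GA2 not_in_take[OF dist i] g gk] by blast
qed

lemma tail_sum: "(\<Sum>i<m. Suc i * y i) = (\<Sum>k<m. \<Sum>i\<in>{k..<m}. (y i :: nat))"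
proof (induction m)
  case 0 then show ?case by simp
next
  case (Suc m)
  have "(\<Sum>k<Suc m. \<Sum>i\<in>{k..<Suc m}. y i) = (\<Sum>k<Suc m. (\<Sum>i\<in>{k..<m}. y i) + y m)"
    by (rule sum.cong) auto
  also have "\<dots> = (\<Sum>k<Suc m. \<Sum>i\<in>{k..<m}. y i) + Suc m * y m" by (simp add: sum.distrib)
  also have "(\<Sum>k<Suc m. \<Sum>i\<in>{k..<m}. y i) = (\<Sum>k<m. \<Sum>i\<in>{k..<m}. y i)" by simp
  finally show ?case using Suc by simp
qed

lemma sum_lt_sets:
  fixes f :: "nat \<Rightarrow> nat"
  assumes "finite X" "finite Y" "card X = card Y" "X \<noteq> {}" "\<forall>x\<in>X. \<forall>y\<in>Y. f x < f y"
  shows "sum f X < sum f Y"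
proof -
  have Yne: "Y \<noteq> {}" using assms by auto
  define M where "M = Max (f ` X)"
  have MX: "\<forall>x\<in>X. f x \<le> M" unfolding M_def using assms(1) by auto
  have "M \<in> f ` X" unfolding M_def using assms(1,4) by (intro Max_in) auto
  then obtain x0 where "x0 \<in> X" "M = f x0" by blast
  then have MY: "\<forall>y\<in>Y. M < f y" using assms(5) by blast
  have "sum f X \<le> card X * M" using sum_bounded_above[of X f M] MX by simp
  also have "\<dots> < card Y * Suc M" using assms(3,4,1,2) Yne by (simp add: card_gt_0_iff)
  also have "\<dots> \<le> sum f Y" using sum_bounded_below[of Y "Suc M" f] MY by (simp add: Suc_le_eq)
  finally show ?thesis .
qed

lemma subset_sum_le:
  fixes a :: "nat \<Rightarrow> nat"
  assumes mono: "\<And>i j. i < j \<Longrightarrow> j < m \<Longrightarrow> a i < a j"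
    and S: "S \<subseteq> {0..<m}" "card S = m - k" and k: "k \<le> m"
  shows "sum a S \<le> sum a {k..<m}" "S \<noteq> {k..<m} \<Longrightarrow> sum a S < sum a {k..<m}"
proof -
  define X where "X = S - {k..<m}"
  define Y where "Y = {k..<m} - S"
  define C where "C = S \<inter> {k..<m}"
  have fS: "finite S" using S(1) by (rule finite_subset) simp
  have fin: "finite S" "finite X" "finite Y" "finite C" unfolding X_def Y_def C_def using fS by auto
  have S1: "S = C \<union> X" "C \<inter> X = {}" unfolding X_def C_def by auto
  have S2: "{k..<m} = C \<union> Y" "C \<inter> Y = {}" unfolding Y_def C_def by auto
  have "card S = card C + card X" using S1 fin by (simp add: card_Un_disjoint)
  moreover have "m - k = card C + card Y" using S2 fin by (metis card_Un_disjoint card_atLeastLessThan)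
  ultimately have cXY: "card X = card Y" using S(2) by simp
  have lt: "\<forall>x\<in>X. \<forall>y\<in>Y. a x < a y"
  proof (intro ballI)
    fix x y assume "x \<in> X" "y \<in> Y"
    then have "x < k" "k \<le> y" "y < m" using S unfolding X_def Y_def by auto
    then show "a x < a y" using mono by simp
  qed
  have eqs: "sum a S = sum a C + sum a X" "sum a {k..<m} = sum a C + sum a Y"
    using S1 S2 fin by (simp_all add: sum.union_disjoint)
  have "sum a X \<le> sum a Y"
  proof (cases "X = {}")
    case True then show ?thesis using cXY fin by simp
  next
    case False then show ?thesis using sum_lt_sets[OF fin(2,3) cXY False lt] by simp
  qed
  then show "sum a S \<le> sum a {k..<m}" using eqs by simp
  assume ne: "S \<noteq> {k..<m}"
  have "X \<noteq> {}"
  proof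
    assume "X = {}"
    then have "S \<subseteq> {k..<m}" unfolding X_def by auto
    moreover have "card S = card {k..<m}" using S(2) by simp
    ultimately have "S = {k..<m}" using card_subset_eq by blast
    then show False using ne by simp
  qed
  then show "sum a S < sum a {k..<m}" using sum_lt_sets[OF fin(2,3) cXY _ lt] eqs by simp
qed

lemma perm_tails_id:
  fixes m :: nat
  assumes p: "\<sigma> permutes {0..<m}" and t: "\<forall>k<m. \<sigma> ` {k..<m} = {k..<m}"
  shows "\<sigma> = id"
proof
  fix i show "\<sigma> i = id i"
  proof (cases "i < m")
    case False then show ?thesis using p by (simp add: permutes_not_in)
  next
    case True
    have e: "\<sigma> ` {i..<m} = {i..<m}" using t True by simp
    have "\<sigma> i \<in> \<sigma> ` {i..<m}" using True by (intro imageI) simp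
    then have si: "\<sigma> i \<in> {i..<m}" by (simp only: e)
    have "\<not> \<sigma> i > i"
    proof
      assume gt: "\<sigma> i > i"
      then have sm: "Suc i < m" using si by simp
      then have e2: "\<sigma> ` {Suc i..<m} = {Suc i..<m}" using t by simp
      have "\<sigma> i \<in> {Suc i..<m}" using gt si by simp
      then have "\<sigma> i \<in> \<sigma> ` {Suc i..<m}" by (simp only: e2)
      then obtain j where j: "j \<in> {Suc i..<m}" "\<sigma> i = \<sigma> j" by (rule imageE) simp
      then have "j = i" using permutes_inj[OF p] by (simp add: inj_eq)
      then show False using j(1) by simp
    qed
    then show ?thesis using si by simp
  qed
qed

lemma rearrangement:
  fixes a :: "nat \<Rightarrow> nat"
  assumes mono: "\<And>i j. i < j \<Longrightarrow> j < m \<Longrightarrow> a i < a j"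
    and p: "\<sigma> permutes {0..<m}" and ne: "\<sigma> \<noteq> id"
  shows "(\<Sum>i<m. Suc i * a (\<sigma> i)) < (\<Sum>i<m. Suc i * a i)"
proof -
  have inj: "inj \<sigma>" using permutes_inj[OF p] .
  have eq: "(\<Sum>i\<in>{k..<m}. a (\<sigma> i)) = sum a (\<sigma> ` {k..<m})" for k
    using inj by (simp add: sum.reindex inj_on_subset[OF inj])
  have sub: "\<sigma> ` {k..<m} \<subseteq> {0..<m}" for k
    using p by (metis atLeastLessThan_iff ivl_subset le0 order_refl permutes_image image_mono)
  have card: "card (\<sigma> ` {k..<m}) = m - k" for k
    using inj by (simp add: card_image inj_on_subset[OF inj])
  have le: "(\<Sum>i\<in>{k..<m}. a (\<sigma> i)) \<le> (\<Sum>i\<in>{k..<m}. a i)" if "k < m" for k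
    unfolding eq using subset_sum_le(1)[OF mono sub card] that by simp
  obtain k where k: "k < m" "\<sigma> ` {k..<m} \<noteq> {k..<m}" using perm_tails_id[OF p] ne by blast
  have lt: "(\<Sum>i\<in>{k..<m}. a (\<sigma> i)) < (\<Sum>i\<in>{k..<m}. a i)"
    unfolding eq using subset_sum_le(2)[OF mono sub card] k by simp
  have "(\<Sum>k<m. \<Sum>i\<in>{k..<m}. a (\<sigma> i)) < (\<Sum>k<m. \<Sum>i\<in>{k..<m}. a i)"
  proof (rule sum_strict_mono_ex1)
    show "\<forall>x\<in>{..<m}. (\<Sum>i\<in>{x..<m}. a (\<sigma> i)) \<le> (\<Sum>i\<in>{x..<m}. a i)" using le by simp
    show "\<exists>x\<in>{..<m}. (\<Sum>i\<in>{x..<m}. a (\<sigma> i)) < (\<Sum>i\<in>{x..<m}. a i)" using lt k by blast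
  qed simp
  then show ?thesis by (simp only: tail_sum)
qed

definition pmon :: "nat \<Rightarrow> nat set \<Rightarrow> (nat \<Rightarrow> nat) \<Rightarrow> mon" where
  "pmon m F \<sigma> = (\<Sum>i<m. Poly_Mapping.single (Suc i, sorted_list_of_set F ! \<sigma> i) 1)"

definition dmon :: "nat \<Rightarrow> nat set \<Rightarrow> mon" where
  "dmon m F = pmon m F id"

lemma W_sum: "W (sum f S) = (\<Sum>i\<in>S. W (f i))"
  by (induction S rule: infinite_finite_induct) (auto simp: W_add)

lemma W_pmon: "W (pmon m F \<sigma>) = (\<Sum>i<m. Suc i * (sorted_list_of_set F ! \<sigma> i))"
  by (simp add: pmon_def W_sum W_single)

lemma xprod: "(\<Prod>i<m. (xvar (Suc i) (c i) :: 'a::comm_ring_1 mpoly)) =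
   Poly_Mapping.single (\<Sum>i<m. Poly_Mapping.single (Suc i, c i) 1) 1"
  by (induction m) (simp_all add: xvar_def mult_single)

lemma of_int_single: "(of_int k :: 'a::comm_ring_1 mpoly) * Poly_Mapping.single \<nu> 1 = Poly_Mapping.single \<nu> (of_int k)"
proof -
  have "(of_int k :: 'a mpoly) * Poly_Mapping.single \<nu> 1 = Poly_Mapping.single 0 (of_int k) * Poly_Mapping.single \<nu> 1"
    by (simp only: single_of_int)
  also have "\<dots> = Poly_Mapping.single \<nu> (of_int k)" by (simp del: single_of_int add: mult_single)
  finally show ?thesis .
qed

lemma maxminor_eq: "(maxminor m F :: 'a::comm_ring_1 mpoly) =
   (\<Sum>\<sigma>\<in>{\<sigma>. \<sigma> permutes {0..<m}}. Poly_Mapping.single (pmon m F \<sigma>) (of_int (sign \<sigma>)))"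
  unfolding maxminor_def Let_def xprod pmon_def of_int_single ..

lemma sorted_mono:
  assumes "finite F" "card F = m"
  shows "\<And>i j. i < j \<Longrightarrow> j < m \<Longrightarrow> sorted_list_of_set F ! i < sorted_list_of_set F ! j"
  using sorted_wrt_nth_less[OF strict_sorted_list_of_set[of F]] assms
  by (simp add: length_sorted_list_of_set)

lemma maxminor_lmd:
  assumes fin: "finite F" and card: "card F = m"
  shows "lmd (maxminor m F :: 'a::comm_ring_1 mpoly) (dmon m F)"
proof -
  define P where "P = {\<sigma>. \<sigma> permutes {0..<m}}"
  have finP: "finite P" unfolding P_def by (rule finite_permutations) simp
  have idP: "id \<in> P" unfolding P_def by simp
  have "(maxminor m F :: 'a mpoly) = Poly_Mapping.single (pmon m F id) (of_int (sign id)) +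
      (\<Sum>\<sigma>\<in>P - {id}. Poly_Mapping.single (pmon m F \<sigma>) (of_int (sign \<sigma>)))"
    unfolding maxminor_eq P_def[symmetric] sum.remove[OF finP idP] by simp
  then have e: "(maxminor m F :: 'a mpoly) - Poly_Mapping.single (dmon m F) 1 =
      (\<Sum>\<sigma>\<in>P - {id}. Poly_Mapping.single (pmon m F \<sigma>) (of_int (sign \<sigma>)))"
    unfolding dmon_def by simp
  show ?thesis unfolding lmd_def
  proof
    fix \<nu> assume "\<nu> \<in> Poly_Mapping.keys ((maxminor m F :: 'a mpoly) - Poly_Mapping.single (dmon m F) 1)"
    then have "\<nu> \<in> Poly_Mapping.keys (\<Sum>\<sigma>\<in>P - {id}. Poly_Mapping.single (pmon m F \<sigma>) (of_int (sign \<sigma>) :: 'a))"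
      unfolding e .
    then obtain \<sigma> where s: "\<sigma> \<in> P - {id}" "\<nu> \<in> Poly_Mapping.keys (Poly_Mapping.single (pmon m F \<sigma>) (of_int (sign \<sigma>) :: 'a))"
      using keys_sum[of "\<lambda>\<sigma>. Poly_Mapping.single (pmon m F \<sigma>) (of_int (sign \<sigma>) :: 'a)" "P - {id}"] by blast
    then have nu: "\<nu> = pmon m F \<sigma>" by (simp split: if_splits)
    have "\<sigma> permutes {0..<m}" "\<sigma> \<noteq> id" using s(1) unfolding P_def by auto
    then have "(\<Sum>i<m. Suc i * (sorted_list_of_set F ! \<sigma> i)) < (\<Sum>i<m. Suc i * (sorted_list_of_set F ! i))"
      using rearrangement[where a="\<lambda>i. sorted_list_of_set F ! i" and m=m and \<sigma>=\<sigma>, OF sorted_mono[OF fin card]] by blast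
    then show "W \<nu> < W (dmon m F)" unfolding nu dmon_def W_pmon by simp
  qed
qed

lemma dmon_keys: "Poly_Mapping.keys (dmon m F) = (\<lambda>i. (Suc i, sorted_list_of_set F ! i)) ` {..<m}"
proof -
  have "Poly_Mapping.keys (sum f S) = (\<Union>i\<in>S. Poly_Mapping.keys (f i))" if "finite S" for f :: "nat \<Rightarrow> mon" and S
    using that by (induction S rule: finite_induct) (simp_all add: keys_add_nat)
  then show ?thesis unfolding dmon_def pmon_def by auto
qed

lemma W_dmon_pos:
  assumes "finite F" "card F = m" "F \<subseteq> {1..n}" "0 < m"
  shows "0 < W (dmon m F)"
proof -
  have "0 < length (sorted_list_of_set F)" using assms by simp
  then have "sorted_list_of_set F ! 0 \<in> set (sorted_list_of_set F)" by (rule nth_mem)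
  then have "sorted_list_of_set F ! 0 \<in> F" using assms(1) by simp
  then have "0 < sorted_list_of_set F ! 0" using assms(3) by auto
  moreover have "Suc 0 * (sorted_list_of_set F ! 0) \<le> (\<Sum>i<m. Suc i * (sorted_list_of_set F ! i))"
    using assms(4) by (intro member_le_sum[of 0 "{..<m}" "\<lambda>i. Suc i * (sorted_list_of_set F ! i)"]) auto
  ultimately show ?thesis unfolding dmon_def W_pmon by simp
qed

lemma maxminor_R:
  assumes "finite F" "card F = m" "F \<subseteq> {1..n}"
  shows "(maxminor m F :: 'a::comm_ring_1 mpoly) \<in> polyring m n"
  unfolding maxminor_eq
proof (rule pr_sum)
  fix \<sigma> assume "\<sigma> \<in> {\<sigma>. \<sigma> permutes {0..<m}}"
  then have p: "\<sigma> permutes {0..<m}" by simp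
  have "Poly_Mapping.keys (pmon m F \<sigma>) \<subseteq> {1..m} \<times> {1..n}"
  proof
    fix x assume "x \<in> Poly_Mapping.keys (pmon m F \<sigma>)"
    then obtain i where i: "i < m" "x \<in> Poly_Mapping.keys (Poly_Mapping.single (Suc i, sorted_list_of_set F ! \<sigma> i) (1::nat))"
      unfolding pmon_def using keys_sum[of "\<lambda>i. Poly_Mapping.single (Suc i, sorted_list_of_set F ! \<sigma> i) (1::nat)" "{..<m}"] by blast
    then have x: "x = (Suc i, sorted_list_of_set F ! \<sigma> i)" by simp
    have "\<sigma> i \<in> {0..<m}" using permutes_in_image[OF p, of i] i(1) by simp
    then have "\<sigma> i < m" by simp
    then have "\<sigma> i < length (sorted_list_of_set F)" using assms by simp
    then have "sorted_list_of_set F ! \<sigma> i \<in> set (sorted_list_of_set F)" by (rule nth_mem)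
    then have "sorted_list_of_set F ! \<sigma> i \<in> F" using assms(1) by simp
    then show "x \<in> {1..m} \<times> {1..n}" using x i(1) assms(3) by auto
  qed
  then show "Poly_Mapping.single (pmon m F \<sigma>) (of_int (sign \<sigma>)) \<in> polyring m n" by (rule pr_single)
qed

lemma lmd_unique:
  fixes f :: "'a::comm_ring_1 mpoly"
  assumes "lmd f \<mu>" "lmd f \<nu>" shows "\<mu> = \<nu>"
proof (rule ccontr)
  assume ne: "\<mu> \<noteq> \<nu>"
  have "\<mu> \<in> Poly_Mapping.keys (f - Poly_Mapping.single \<nu> 1)"
    using lmd_lookup[OF assms(1)] ne by (simp add: in_keys_iff lookup_minus lookup_single)
  then have "W \<mu> < W \<nu>" using assms(2) unfolding lmd_def by blast
  moreover have "\<nu> \<in> Poly_Mapping.keys (f - Poly_Mapping.single \<mu> 1)"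
    using lmd_lookup[OF assms(2)] ne by (simp add: in_keys_iff lookup_minus lookup_single)
  then have "W \<nu> < W \<mu>" using assms(1) unfolding lmd_def by blast
  ultimately show False by simp
qed

lemma finite_cs: "finite (clique_simplices m n Fs)"
proof -
  have "clique_simplices m n Fs \<subseteq> Pow {1..n}" unfolding clique_simplices_def by auto
  then show ?thesis by (rule finite_subset) simp
qed

lemma max_clique:
  assumes "X \<in> clique_simplices m n Fs"
  shows "\<exists>Y\<in>cliques m n Fs. X \<subseteq> Y"
proof -
  obtain Y where Y: "Y \<in> clique_simplices m n Fs" "X \<subseteq> Y"
    "\<forall>b\<in>clique_simplices m n Fs. Y \<subseteq> b \<longrightarrow> Y = b"
    using finite_has_maximal2[OF finite_cs assms] by blast
  then have "Y \<in> cliques m n Fs" unfolding cliques_def by auto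
  then show ?thesis using Y(2) by blast
qed

lemma posdisj:
  assumes pc: "pure_complex m n Fs" and cs: "cliques_simplices m n Fs" and cl: "closed_wrt m Fs"
    and F: "F \<in> Fs" and G: "G \<in> Fs" and ne: "F \<noteq> G" and i: "i < m"
  shows "sorted_list_of_set F ! i \<noteq> sorted_list_of_set G ! i"
proof
  assume eq: "sorted_list_of_set F ! i = sorted_list_of_set G ! i"
  have all: "\<forall>A. A \<subseteq> F \<union> G \<and> card A = m \<longrightarrow> A \<in> Fs"
    using cl F G eq i unfolding closed_wrt_def by blast
  have FG: "F \<subseteq> {1..n}" "card F = m" "G \<subseteq> {1..n}" "card G = m" using pc F G unfolding pure_complex_def by auto
  have "F \<union> G \<subseteq> {1..n}" using FG by blast
  then have finU: "finite (F \<union> G)" by (rule finite_subset) simp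
  have "\<not> G \<subseteq> F"
  proof
    assume "G \<subseteq> F"
    moreover have "finite F" using FG(1) by (rule finite_subset) simp
    ultimately have "G = F" using FG(2,4) card_subset_eq by metis
    then show False using ne by simp
  qed
  then have "F \<subset> F \<union> G" by blast
  then have cgt: "m < card (F \<union> G)" using psubset_card_mono[OF finU \<open>F \<subset> F \<union> G\<close>] FG(2) by simp
  have "F \<union> G \<in> clique_simplices m n Fs" unfolding clique_simplices_def using FG all cgt by auto
  then obtain Y where Y: "Y \<in> cliques m n Fs" "F \<union> G \<subseteq> Y" using max_clique by blast
  have "card Y = m" using cs Y(1) unfolding cliques_simplices_def by blast
  moreover have "Y \<subseteq> {1..n}" using Y(1) unfolding cliques_def clique_simplices_def by blast
  then have "finite Y" by (rule finite_subset) simp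
  then have "card (F \<union> G) \<le> card Y" using Y(2) by (rule card_mono)
  ultimately show False using cgt by simp
qed

definition lmof :: "'a::comm_ring_1 mpoly \<Rightarrow> mon" where
  "lmof f = (SOME \<mu>. lmd f \<mu>)"

lemma lmof_eq: "lmd f \<mu> \<Longrightarrow> lmof f = \<mu>"
  unfolding lmof_def by (rule some_equality) (auto intro: lmd_unique)

theorem part_a:
  fixes m n :: nat and Fs :: "nat set set"
  assumes "3 \<le> m \<and> pure_complex m n Fs \<and> cond_i m n Fs \<and> cond_ii m n Fs \<and>
        cliques_simplices m n Fs \<and> closed_wrt m Fs"
  shows "\<exists>fs. regular_sequence (polyring m n) fs \<and>
              ideal_gen (polyring m n) (set fs) = (J_Delta m n Fs :: 'a::field mpoly set)"
proof -
  have m3: "3 \<le> m" and pc: "pure_complex m n Fs" and cs: "cliques_simplices m n Fs"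
    and cl: "closed_wrt m Fs" using assms by auto
  have Fp: "finite F" "F \<subseteq> {1..n}" "card F = m" if "F \<in> Fs" for F
  proof -
    have a: "F \<subseteq> {1..n} \<and> card F = m" using pc that unfolding pure_complex_def by blast
    then show "finite F" by (meson finite_atLeastAtMost finite_subset)
    show "F \<subseteq> {1..n}" "card F = m" using a by auto
  qed
  have finFs: "finite Fs"
  proof -
    have "Fs \<subseteq> Pow {1..n}" using Fp by blast
    then show ?thesis by (rule finite_subset) simp
  qed
  obtain Fl where Fl: "set Fl = Fs" "distinct Fl" using finite_distinct_list[OF finFs] by blast
  define fs where "fs = map (\<lambda>F. maxminor m F :: 'a mpoly) Fl"
  have lmdF: "lmd (maxminor m F :: 'a mpoly) (dmon m F)" if "F \<in> Fs" for F
    using maxminor_lmd Fp[OF that] by blast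
  have lmF: "lmof (maxminor m F :: 'a mpoly) = dmon m F" if "F \<in> Fs" for F
    using lmof_eq[OF lmdF[OF that]] .
  have cop: "Poly_Mapping.keys (dmon m F) \<inter> Poly_Mapping.keys (dmon m G) = {}"
    if "F \<in> Fs" "G \<in> Fs" "F \<noteq> G" for F G
  proof -
    have "sorted_list_of_set F ! i \<noteq> sorted_list_of_set G ! i" if "i < m" for i
      using posdisj[OF pc cs cl \<open>F \<in> Fs\<close> \<open>G \<in> Fs\<close> \<open>F \<noteq> G\<close> that] .
    then show ?thesis unfolding dmon_keys by auto
  qed
  have dne: "Poly_Mapping.keys (dmon m F) \<noteq> {}" for F
    using m3 unfolding dmon_keys by (simp add: lessThan_empty_iff)
  have inj: "inj_on (\<lambda>F. maxminor m F :: 'a mpoly) Fs"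
  proof
    fix F G assume F: "F \<in> Fs" and G: "G \<in> Fs" and e: "(maxminor m F :: 'a mpoly) = maxminor m G"
    have "dmon m F = dmon m G" using lmd_unique[OF lmdF[OF F]] lmdF[OF G] e by simp
    then show "F = G" using cop[OF F G] dne[of F] by auto
  qed
  have sfs: "set fs = (\<lambda>F. maxminor m F :: 'a mpoly) ` Fs" unfolding fs_def using Fl by simp
  have dfs: "distinct fs" unfolding fs_def using Fl inj by (simp add: distinct_map)
  have GA: "GA m n (set fs) lmof"
    unfolding GA_def
  proof (intro conjI ballI impI)
    show "finite (set fs)" by simp
  next
    fix f assume "f \<in> set fs"
    then obtain F where F: "F \<in> Fs" "f = maxminor m F" using sfs by auto
    show "f \<in> polyring m n" using F maxminor_R Fp[OF F(1)] by blast
    show "lmd f (lmof f)" using F lmdF lmF by simp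
    have "0 < W (dmon m F)" using W_dmon_pos[of F m n] Fp[OF F(1)] m3 by simp
    then show "0 < W (lmof f)" using F lmF by simp
  next
    fix f g assume "f \<in> set fs" "g \<in> set fs" "f \<noteq> g"
    then obtain F G where F: "F \<in> Fs" "f = maxminor m F" and G: "G \<in> Fs" "g = maxminor m G" using sfs by auto
    then have "F \<noteq> G" using \<open>f \<noteq> g\<close> by blast
    then show "Poly_Mapping.keys (lmof f) \<inter> Poly_Mapping.keys (lmof g) = {}"
      using F G lmF cop by simp
  qed
  have "regular_sequence (polyring m n) fs" using regseq[OF GA dfs] .
  moreover have "ideal_gen (polyring m n) (set fs) = (J_Delta m n Fs :: 'a mpoly set)"
    unfolding J_Delta_def sfs ..
  ultimately show ?thesis by blast
qed

lemma sorted_img: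
  fixes g :: "nat \<Rightarrow> nat"
  assumes mono: "\<And>p p'. p < p' \<Longrightarrow> p' < m \<Longrightarrow> g p < g p'"
  shows "sorted_list_of_set (g ` {0..<m}) = map g [0..<m]"
proof -
  have inj: "inj_on g {0..<m}"
  proof (rule inj_onI)
    fix x y assume "x \<in> {0..<m}" "y \<in> {0..<m}" "g x = g y"
    then show "x = y" using mono by (metis atLeastLessThan_iff linorder_neqE_nat less_irrefl)
  qed
  have "sorted_wrt (<) (map g [0..<m])"
    unfolding sorted_wrt_map by (rule sorted_wrt_mono_rel[of _ "(<)"]) (auto intro: mono simp: sorted_wrt_upt)
  moreover have "set (map g [0..<m]) = g ` {0..<m}" by simp
  moreover have "length (map g [0..<m]) = card (g ` {0..<m})" using inj by (simp add: card_image)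
  ultimately show ?thesis using sorted_list_of_set_unique[of "g ` {0..<m}" "map g [0..<m]"] by simp
qed

lemma card_img:
  fixes g :: "nat \<Rightarrow> nat"
  assumes mono: "\<And>p p'. p < p' \<Longrightarrow> p' < m \<Longrightarrow> g p < g p'"
  shows "card (g ` {0..<m}) = m"
proof -
  have "length (sorted_list_of_set (g ` {0..<m})) = m" using sorted_img[OF mono] by simp
  then show ?thesis by simp
qed

lemma closed_by_g:
  fixes g :: "nat \<Rightarrow> nat \<Rightarrow> nat"
  assumes mono: "\<And>j p p'. j < r \<Longrightarrow> p < p' \<Longrightarrow> p' < m \<Longrightarrow> g j p < g j p'"
    and sep: "\<And>j l p. j < r \<Longrightarrow> l < r \<Longrightarrow> p < m \<Longrightarrow> g j p = g l p \<Longrightarrow> j = l"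
  shows "closed_wrt m ((\<lambda>j. g j ` {0..<m}) ` {0..<r})"
  unfolding closed_wrt_def
proof (intro ballI impI allI)
  fix F G A
  assume F: "F \<in> (\<lambda>j. g j ` {0..<m}) ` {0..<r}" and G: "G \<in> (\<lambda>j. g j ` {0..<m}) ` {0..<r}"
    and ex: "\<exists>i<m. sorted_list_of_set F ! i = sorted_list_of_set G ! i"
    and A: "A \<subseteq> F \<union> G \<and> card A = m"
  obtain j where j: "j < r" "F = g j ` {0..<m}" using F by auto
  obtain l where l: "l < r" "G = g l ` {0..<m}" using G by auto
  obtain i where i: "i < m" "sorted_list_of_set F ! i = sorted_list_of_set G ! i" using ex by blast
  have "g j i = g l i" using i j l sorted_img[of m "g j"] sorted_img[of m "g l"] mono by simp
  then have "j = l" using sep j(1) l(1) i(1) by blast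
  then have FG: "G = F" using j l by simp
  have cF: "card F = m" using j card_img[of m "g j"] mono by simp
  have "finite F" using j by simp
  then have "A = F" using A FG cF by (metis Un_absorb card_subset_eq)
  then show "A \<in> (\<lambda>j. g j ` {0..<m}) ` {0..<r}" using F by simp
qed

lemma cliques_eq_cs:
  assumes pc: "pure_complex m n Fs" and cs: "cliques_simplices m n Fs"
  shows "cliques m n Fs = Fs"
proof -
  have finF: "finite F" "F \<subseteq> {1..n}" "card F = m" if "F \<in> Fs" for F
  proof -
    have a: "F \<subseteq> {1..n} \<and> card F = m" using pc that unfolding pure_complex_def by blast
    then show "finite F" using finite_subset by blast
    show "F \<subseteq> {1..n}" "card F = m" using a by auto
  qed
  have fincs: "finite (clique_simplices m n Fs)"
  proof -
    have "clique_simplices m n Fs \<subseteq> Pow {1..n}" unfolding clique_simplices_def by auto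
    then show ?thesis by (rule finite_subset) simp
  qed
  show ?thesis
  proof
    show "cliques m n Fs \<subseteq> Fs"
    proof
      fix Y assume Y: "Y \<in> cliques m n Fs"
      then have "card Y = m" using cs unfolding cliques_simplices_def by blast
      moreover have "\<forall>A. A \<subseteq> Y \<and> card A = m \<longrightarrow> A \<in> Fs" using Y unfolding cliques_def clique_simplices_def by blast
      ultimately show "Y \<in> Fs" by blast
    qed
    show "Fs \<subseteq> cliques m n Fs"
    proof
      fix F assume F: "F \<in> Fs"
      have "F \<in> clique_simplices m n Fs"
        unfolding clique_simplices_def using finF[OF F] F
        by (auto dest: card_subset_eq[rotated])
      then obtain Y where Y: "Y \<in> clique_simplices m n Fs" "F \<subseteq> Y"
        "\<forall>b\<in>clique_simplices m n Fs. Y \<subseteq> b \<longrightarrow> Y = b"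
        using finite_has_maximal2[OF fincs] by blast
      then have Yc: "Y \<in> cliques m n Fs" unfolding cliques_def by auto
      then have "card Y = m" using cs unfolding cliques_simplices_def by blast
      moreover have "Y \<subseteq> {1..n}" using Y(1) unfolding clique_simplices_def by blast
      then have "finite Y" using finite_subset by blast
      ultimately have "F = Y" using Y(2) finF[OF F] card_subset_eq by metis
      then show "F \<in> cliques m n Fs" using Yc by simp
    qed
  qed
qed

lemma cliques_eq_int:
  assumes pc: "pure_complex m n Fs" and m3: "3 \<le> m"
    and int: "\<And>F G. F \<in> Fs \<Longrightarrow> G \<in> Fs \<Longrightarrow> F \<noteq> G \<Longrightarrow> card (F \<inter> G) \<le> 1"
  shows "cliques m n Fs = Fs" "cliques_simplices m n Fs"
proof -
  have finF: "finite F" "F \<subseteq> {1..n}" "card F = m" if "F \<in> Fs" for F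
  proof -
    have a: "F \<subseteq> {1..n} \<and> card F = m" using pc that unfolding pure_complex_def by blast
    then show "finite F" using finite_subset by blast
    show "F \<subseteq> {1..n}" "card F = m" using a by auto
  qed
  have cs_eq: "clique_simplices m n Fs = Fs"
  proof
    show "clique_simplices m n Fs \<subseteq> Fs"
    proof
      fix \<Gamma> assume g: "\<Gamma> \<in> clique_simplices m n Fs"
      then have gs: "\<Gamma> \<subseteq> {1..n}" "m \<le> card \<Gamma>" "\<forall>A. A \<subseteq> \<Gamma> \<and> card A = m \<longrightarrow> A \<in> Fs"
        unfolding clique_simplices_def by auto
      have "\<not> m < card \<Gamma>"
      proof
        assume lt: "m < card \<Gamma>"
        then obtain B where B: "B \<subseteq> \<Gamma>" "card B = Suc m" "finite B"
          using obtain_subset_with_card_n[of "Suc m" \<Gamma>] by auto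
        obtain a where a: "a \<in> B" using B(2) by (metis card.empty ex_in_conv nat.simps(3))
        have "card (B - {a}) = m" using B a by simp
        then obtain b where b: "b \<in> B - {a}" using m3 by (metis card.empty ex_in_conv not_numeral_le_zero)
        define A1 where "A1 = B - {a}"
        define A2 where "A2 = B - {b}"
        have c1: "card A1 = m" unfolding A1_def using B a by simp
        have c2: "card A2 = m" unfolding A2_def using B b by simp
        have "A1 \<subseteq> \<Gamma>" "A2 \<subseteq> \<Gamma>" unfolding A1_def A2_def using B(1) by auto
        then have "A1 \<in> Fs" "A2 \<in> Fs" using gs(3) c1 c2 by blast+
        moreover have "A1 \<noteq> A2" unfolding A1_def A2_def using b by auto
        ultimately have le: "card (A1 \<inter> A2) \<le> 1" using int by blast
        have "A1 \<inter> A2 = B - {a} - {b}" unfolding A1_def A2_def by auto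
        then have "card (A1 \<inter> A2) = m - 1" using B a b by simp
        then show False using le m3 by simp
      qed
      then have "card \<Gamma> = m" using gs(2) by simp
      then show "\<Gamma> \<in> Fs" using gs(3) by blast
    qed
    show "Fs \<subseteq> clique_simplices m n Fs"
    proof
      fix F assume F: "F \<in> Fs"
      show "F \<in> clique_simplices m n Fs"
        unfolding clique_simplices_def using finF[OF F] F
        by (auto dest: card_subset_eq[rotated])
    qed
  qed
  show ceq: "cliques m n Fs = Fs"
  proof
    show "cliques m n Fs \<subseteq> Fs" unfolding cliques_def cs_eq by blast
    show "Fs \<subseteq> cliques m n Fs"
    proof
      fix F assume F: "F \<in> Fs"
      have "\<not> (\<exists>G\<in>Fs. F \<subset> G)"
      proof
        assume "\<exists>G\<in>Fs. F \<subset> G"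
        then obtain G where G: "G \<in> Fs" "F \<subset> G" by blast
        then have "card F < card G" using finF[OF G(1)] psubset_card_mono by blast
        then show False using finF[OF F] finF[OF G(1)] by simp
      qed
      then show "F \<in> cliques m n Fs" unfolding cliques_def cs_eq using F by blast
    qed
  qed
  show "cliques_simplices m n Fs" unfolding cliques_simplices_def ceq using finF by blast
qed

lemma divmod_eq:
  fixes a b t t' K :: nat
  assumes "a * K + t = b * K + t'" "t < K" "t' < K"
  shows "a = b" "t = t'"
proof -
  have e1: "(a * K + t) div K = a" using assms(2) by simp
  have e2: "(b * K + t') div K = b" using assms(3) by simp
  show "a = b" using e1 e2 assms(1) by metis
  then show "t = t'" using assms(1) by simp
qed

locale bcon =
  fixes m r :: nat and adj :: "nat \<Rightarrow> nat \<Rightarrow> bool"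
  assumes rm: "r \<le> m" and sym: "\<And>j l. adj j l = adj l j"
begin

definition tt :: "nat \<Rightarrow> nat \<Rightarrow> nat" where
  "tt j p = (if p < r \<and> p \<noteq> j \<and> adj j p then min j p else m + j)"

definition gg :: "nat \<Rightarrow> nat \<Rightarrow> nat" where
  "gg j p = (j + p) * (2 * m) + tt j p + 1"

lemma tt_lt: "j < r \<Longrightarrow> tt j p < 2 * m"
  unfolding tt_def using rm by auto

lemma gg_mono: assumes "j < r" "p < p'" shows "gg j p < gg j p'"
proof -
  have "gg j p < (j + p) * (2 * m) + 2 * m + 1" unfolding gg_def using tt_lt[OF assms(1)] by simp
  also have "\<dots> = (j + Suc p) * (2 * m) + 1" by (simp add: algebra_simps)
  also have "\<dots> \<le> (j + p') * (2 * m) + 1" using assms(2) by (intro add_right_mono mult_right_mono) auto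
  also have "\<dots> \<le> gg j p'" unfolding gg_def by simp
  finally show ?thesis .
qed

lemma gg_inj: "j < r \<Longrightarrow> gg j p = gg j p' \<Longrightarrow> p = p'"
  using gg_mono by (metis less_irrefl linorder_neqE_nat)

lemma gg_dec:
  assumes "j < r" "l < r" "gg j p = gg l p'"
  shows "j + p = l + p'" "tt j p = tt l p'"
proof -
  have e: "(j + p) * (2 * m) + tt j p = (l + p') * (2 * m) + tt l p'" using assms(3) unfolding gg_def by simp
  show "j + p = l + p'" using divmod_eq(1)[OF e tt_lt[OF assms(1)] tt_lt[OF assms(2)]] .
  show "tt j p = tt l p'" using divmod_eq(2)[OF e tt_lt[OF assms(1)] tt_lt[OF assms(2)]] .
qed

lemma gg_inter:
  assumes j: "j < r" and l: "l < r" and jl: "j \<noteq> l" and e: "gg j p = gg l p'"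
  shows "p = l" "p' = j" "adj j l"
proof -
  have s: "j + p = l + p'" and t: "tt j p = tt l p'" using gg_dec[OF j l e] by auto
  have jsh: "p < r \<and> p \<noteq> j \<and> adj j p"
  proof (rule ccontr)
    assume "\<not> (p < r \<and> p \<noteq> j \<and> adj j p)"
    then have "tt j p = m + j" unfolding tt_def by auto
    then have "tt l p' = m + j" using t by simp
    moreover have "tt l p' = min l p' \<or> tt l p' = m + l" unfolding tt_def by auto
    ultimately show False using l rm jl by auto
  qed
  have lsh: "p' < r \<and> p' \<noteq> l \<and> adj l p'"
  proof (rule ccontr)
    assume "\<not> (p' < r \<and> p' \<noteq> l \<and> adj l p')"
    then have "tt l p' = m + l" unfolding tt_def by auto
    then have "tt j p = m + l" using t by simp
    moreover have "tt j p = min j p" using jsh unfolding tt_def by auto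
    ultimately show False using j rm by auto
  qed
  have "min j p = min l p'" using t jsh lsh unfolding tt_def by auto
  then have "p = l \<and> p' = j" using s jl by (auto simp: min_def split: if_splits)
  then show "p = l" "p' = j" "adj j l" using jsh by auto
qed

lemma gg_shared:
  assumes "j < r" "l < r" "j \<noteq> l" "adj j l"
  shows "gg j l = gg l j"
  using assms sym[of j l] unfolding gg_def tt_def by (simp add: min.commute add.commute)

lemma gg_range: "j < r \<Longrightarrow> p < m \<Longrightarrow> 1 \<le> gg j p \<and> gg j p \<le> (2 * m + 1) * (2 * m)"
proof -
  assume a: "j < r" "p < m"
  have "gg j p < (j + p) * (2 * m) + 2 * m + 1" unfolding gg_def using tt_lt[OF a(1)] by simp
  also have "\<dots> = (j + p + 1) * (2 * m) + 1" by (simp add: algebra_simps)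
  also have "\<dots> \<le> (2 * m) * (2 * m) + 1" using a rm by (intro add_right_mono mult_right_mono) auto
  finally have "gg j p \<le> (2 * m) * (2 * m)" by simp
  also have "\<dots> \<le> (2 * m + 1) * (2 * m)" by simp
  finally show ?thesis unfolding gg_def by simp
qed

end

theorem part_b:
  fixes V :: "'v set" and E :: "'v set set" and m :: nat
  assumes asm: "simple_graph V E \<and> V \<noteq> {} \<and> card V \<le> m \<and> 3 \<le> m"
  shows "\<exists>n Fs. pure_complex m n Fs \<and> closed_complex m n Fs \<and> cond_i m n Fs \<and> cond_ii m n Fs \<and>
              cliques_simplices m n Fs \<and> clique_graph_iso m n Fs V E"
proof -
  have finV: "finite V" and Vne: "V \<noteq> {}" and cVm: "card V \<le> m" and m3: "3 \<le> m"
    using asm unfolding simple_graph_def by auto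
  define r where "r = card V"
  have r0: "0 < r" using finV Vne unfolding r_def by (simp add: card_gt_0_iff)
  have rm: "r \<le> m" using cVm unfolding r_def by simp
  obtain v where v: "bij_betw v {0..<r} V" using ex_bij_betw_nat_finite[OF finV] unfolding r_def by blast
  define adj where "adj j l = ({v j, v l} \<in> E)" for j l
  interpret bcon m r adj
    by unfold_locales (auto simp: rm adj_def insert_commute)
  define Fj where "Fj j = gg j ` {0..<m}" for j
  define Fs where "Fs = Fj ` {0..<r}"
  define n where "n = (2 * m + 1) * (2 * m)"
  have Fj_card: "card (Fj j) = m" if "j < r" for j
    unfolding Fj_def by (rule card_img) (use gg_mono that in auto)
  have Fj_sub: "Fj j \<subseteq> {1..n}" if "j < r" for j
    unfolding Fj_def n_def using gg_range that by auto
  have Fj_int1: "Fj j \<inter> Fj l \<subseteq> {gg j l}" if "j < r" "l < r" "j \<noteq> l" for j l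
  proof
    fix x assume "x \<in> Fj j \<inter> Fj l"
    then have x1: "x \<in> gg j ` {0..<m}" and x2: "x \<in> gg l ` {0..<m}" unfolding Fj_def by auto
    obtain p where p: "x = gg j p" using x1 by blast
    obtain p' where p': "x = gg l p'" using x2 by blast
    have "gg j p = gg l p'" using p p' by simp
    then have "p = l" by (rule gg_inter(1)[OF that])
    then show "x \<in> {gg j l}" using p by simp
  qed
  have Fj_int2: "Fj j \<inter> Fj l \<noteq> {} \<longleftrightarrow> adj j l" if "j < r" "l < r" "j \<noteq> l" for j l
  proof
    assume "Fj j \<inter> Fj l \<noteq> {}"
    then obtain x where "x \<in> Fj j \<inter> Fj l" by blast
    then have x1: "x \<in> gg j ` {0..<m}" and x2: "x \<in> gg l ` {0..<m}" unfolding Fj_def by auto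
    obtain p where p: "x = gg j p" using x1 by blast
    obtain p' where p': "x = gg l p'" using x2 by blast
    have "gg j p = gg l p'" using p p' by simp
    then show "adj j l" using gg_inter(3)[OF that] by simp
  next
    assume a: "adj j l"
    have "gg j l \<in> Fj j" unfolding Fj_def using that rm by auto
    moreover have "gg l j \<in> Fj l" unfolding Fj_def using that rm by auto
    moreover have "gg j l = gg l j" using gg_shared[OF that a] .
    ultimately show "Fj j \<inter> Fj l \<noteq> {}" by auto
  qed
  have Fj_inj: "inj_on Fj {0..<r}"
  proof (rule inj_onI)
    fix j l assume j: "j \<in> {0..<r}" and l: "l \<in> {0..<r}" and e: "Fj j = Fj l"
    show "j = l"
    proof (rule ccontr)
      assume ne: "j \<noteq> l"
      have "gg j j \<in> Fj j" unfolding Fj_def using j rm by auto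
      then have "gg j j \<in> Fj j \<inter> Fj l" using e by simp
      then have "gg j j = gg j l" using Fj_int1[of j l] j l ne by auto
      then show False using gg_inj j ne by auto
    qed
  qed
  have pc: "pure_complex m n Fs"
    unfolding pure_complex_def Fs_def using r0 Fj_sub Fj_card by auto
  have int1: "card (F \<inter> G) \<le> 1" if "F \<in> Fs" "G \<in> Fs" "F \<noteq> G" for F G
  proof -
    have "F \<in> Fj ` {0..<r}" using that(1) Fs_def by simp
    then obtain j where j: "j < r" "F = Fj j" by auto
    have "G \<in> Fj ` {0..<r}" using that(2) Fs_def by simp
    then obtain l where l: "l < r" "G = Fj l" by auto
    note jl = j(1) l(1) j(2) l(2)
    then have "j \<noteq> l" using that by auto
    then have "F \<inter> G \<subseteq> {gg j l}" using Fj_int1 jl by simp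
    then have "card (F \<inter> G) \<le> card {gg j l}" by (rule card_mono[rotated]) simp
    then show ?thesis by simp
  qed
  have ceq: "cliques m n Fs = Fs" and cs: "cliques_simplices m n Fs"
    using cliques_eq_int[OF pc m3 int1] by auto
  have ci: "cond_i m n Fs" unfolding cond_i_def ceq using int1 by blast
  have cii: "cond_ii m n Fs" unfolding cond_ii_def ceq
  proof (intro ballI impI)
    fix U V' W assume U: "U \<in> Fs" and V': "V' \<in> Fs" and W: "W \<in> Fs" and d: "U \<noteq> V' \<and> U \<noteq> W \<and> V' \<noteq> W"
    have "U \<in> Fj ` {0..<r}" using U Fs_def by simp
    then obtain j where j: "j < r" "U = Fj j" by auto
    have "V' \<in> Fj ` {0..<r}" using V' Fs_def by simp
    then obtain l where l: "l < r" "V' = Fj l" by auto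
    have "W \<in> Fj ` {0..<r}" using W Fs_def by simp
    then obtain k where k: "k < r" "W = Fj k" by auto
    note jlk = j(1) l(1) k(1) j(2) l(2) k(2)
    have ne: "j \<noteq> l" "j \<noteq> k" "l \<noteq> k" using d jlk by auto
    show "U \<inter> V' \<inter> W = {}"
    proof (rule ccontr)
      assume "U \<inter> V' \<inter> W \<noteq> {}"
      then obtain x where x: "x \<in> Fj j" "x \<in> Fj l" "x \<in> Fj k" unfolding jlk(4-6) by blast
      have "x \<in> {gg j l}" using Fj_int1[OF jlk(1,2) ne(1)] x by blast
      moreover have "x \<in> {gg j k}" using Fj_int1[OF jlk(1,3) ne(2)] x by blast
      ultimately have "gg j l = gg j k" by simp
      then have "l = k" by (rule gg_inj[OF jlk(1)])
      then show False using ne by simp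
    qed
  qed
  have cc: "closed_complex m n Fs"
    unfolding closed_complex_def
  proof (rule exI[of _ id], rule conjI)
    show "bij_betw id {1..n} {1..n}" by simp
    have "(`) id ` Fs = (\<lambda>j. gg j ` {0..<m}) ` {0..<r}" unfolding Fs_def Fj_def by (simp add: image_image)
    moreover have "closed_wrt m ((\<lambda>j. gg j ` {0..<m}) ` {0..<r})"
    proof (rule closed_by_g)
      show "gg j p < gg j p'" if "j < r" "p < p'" "p' < m" for j p p' using gg_mono that by blast
      show "j = l" if "j < r" "l < r" "p < m" "gg j p = gg l p" for j l p
        using gg_dec(1)[OF that(1,2,4)] by simp
    qed
    ultimately show "closed_wrt m ((`) id ` Fs)" by simp
  qed
  have bFj: "bij_betw Fj {0..<r} Fs" unfolding Fs_def using Fj_inj by (simp add: bij_betw_def)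
  define f where "f C = v (the_inv_into {0..<r} Fj C)" for C
  have iso: "clique_graph_iso m n Fs V E"
    unfolding clique_graph_iso_def ceq
  proof (rule exI[of _ f], rule conjI)
    show "bij_betw f Fs V"
      unfolding f_def using bij_betw_trans[OF bij_betw_the_inv_into[OF bFj] v] by (simp add: comp_def)
    show "\<forall>C\<in>Fs. \<forall>D\<in>Fs. C \<noteq> D \<longrightarrow> ({f C, f D} \<in> E) = (C \<inter> D \<noteq> {})"
    proof (intro ballI impI)
      fix C D assume C: "C \<in> Fs" and D: "D \<in> Fs" and ne: "C \<noteq> D"
      have "C \<in> Fj ` {0..<r}" using C Fs_def by simp
    then obtain j where j: "j < r" "C = Fj j" by auto
      have "D \<in> Fj ` {0..<r}" using D Fs_def by simp
    then obtain l where l: "l < r" "D = Fj l" by auto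
      note jl = j(1) l(1) j(2) l(2)
      have jne: "j \<noteq> l" using jl ne by auto
      have "f C = v j" "f D = v l" unfolding f_def jl using the_inv_into_f_f[OF Fj_inj] jl by auto
      then show "({f C, f D} \<in> E) = (C \<inter> D \<noteq> {})" using Fj_int2[OF jl(1,2) jne] jl unfolding adj_def by simp
    qed
  qed
  show ?thesis using pc cc ci cii cs iso by blast
qed

lemma rank_bij:
  fixes kk :: "nat \<Rightarrow> nat" and n :: nat
  defines "lt \<equiv> \<lambda>u v. kk u < kk v \<or> (kk u = kk v \<and> u < v)"
  defines "\<pi> \<equiv> \<lambda>v. card {u\<in>{1..n}. lt u v} + 1"
  shows "bij_betw \<pi> {1..n} {1..n}"
    "\<And>v w. v \<in> {1..n} \<Longrightarrow> w \<in> {1..n} \<Longrightarrow> kk v < kk w \<Longrightarrow> \<pi> v < \<pi> w"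
proof -
  have trans: "lt u w" if "lt u v" "lt v w" for u v w using that unfolding lt_def by auto
  have irr: "\<not> lt v v" for v unfolding lt_def by auto
  have tot: "v = w \<or> lt v w \<or> lt w v" for v w unfolding lt_def by auto
  have mono: "\<pi> v < \<pi> w" if "v \<in> {1..n}" "w \<in> {1..n}" "lt v w" for v w
  proof -
    have "{u\<in>{1..n}. lt u v} \<subset> {u\<in>{1..n}. lt u w}"
    proof
      show "{u\<in>{1..n}. lt u v} \<subseteq> {u\<in>{1..n}. lt u w}" using trans that(3) by blast
      show "{u\<in>{1..n}. lt u v} \<noteq> {u\<in>{1..n}. lt u w}" using that irr by blast
    qed
    then have "card {u\<in>{1..n}. lt u v} < card {u\<in>{1..n}. lt u w}"
      by (rule psubset_card_mono[rotated]) simp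
    then show ?thesis unfolding \<pi>_def by simp
  qed
  have inj: "inj_on \<pi> {1..n}"
  proof (rule inj_onI)
    fix v w assume "v \<in> {1..n}" "w \<in> {1..n}" "\<pi> v = \<pi> w"
    then show "v = w" using tot[of v w] mono by (metis less_irrefl)
  qed
  have sub: "\<pi> ` {1..n} \<subseteq> {1..n}"
  proof
    fix x assume "x \<in> \<pi> ` {1..n}"
    then obtain v where v: "v \<in> {1..n}" "x = \<pi> v" by blast
    have "{u\<in>{1..n}. lt u v} \<subseteq> {1..n} - {v}" using irr by blast
    then have "card {u\<in>{1..n}. lt u v} \<le> card ({1..n} - {v})" by (rule card_mono[rotated]) simp
    also have "\<dots> = n - 1" using v by simp
    finally show "x \<in> {1..n}" using v unfolding \<pi>_def by auto
  qed
  have "card (\<pi> ` {1..n}) = card {1..n::nat}" using inj by (simp add: card_image)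
  then have "\<pi> ` {1..n} = {1..n}" using sub by (metis card_subset_eq finite_atLeastAtMost)
  then show "bij_betw \<pi> {1..n} {1..n}" using inj unfolding bij_betw_def by simp
  show "\<And>v w. v \<in> {1..n} \<Longrightarrow> w \<in> {1..n} \<Longrightarrow> kk v < kk w \<Longrightarrow> \<pi> v < \<pi> w"
    using mono unfolding lt_def by blast
qed

theorem part_c:
  fixes m n :: nat and Fs :: "nat set set"
  assumes asm: "3 \<le> m \<and> pure_complex m n Fs \<and> cond_i m n Fs \<and> cond_ii m n Fs \<and>
        cliques_simplices m n Fs \<and> card Fs \<le> m"
  shows "closed_complex m n Fs"
proof -
  have pc: "pure_complex m n Fs" and ci: "cond_i m n Fs" and cii: "cond_ii m n Fs"
    and cs: "cliques_simplices m n Fs" and cFm: "card Fs \<le> m" using asm by auto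
  have ceq: "cliques m n Fs = Fs" by (rule cliques_eq_cs[OF pc cs])
  have Fp: "finite F" "F \<subseteq> {1..n}" "card F = m" if "F \<in> Fs" for F
  proof -
    have a: "F \<subseteq> {1..n} \<and> card F = m" using pc that unfolding pure_complex_def by blast
    then show "finite F" using finite_subset by blast
    show "F \<subseteq> {1..n}" "card F = m" using a by auto
  qed
  have int1: "card (F \<inter> G) \<le> 1" if "F \<in> Fs" "G \<in> Fs" "F \<noteq> G" for F G
    using ci that unfolding cond_i_def ceq by blast
  have tri: "F \<inter> G \<inter> H = {}" if "F \<in> Fs" "G \<in> Fs" "H \<in> Fs" "F \<noteq> G" "F \<noteq> H" "G \<noteq> H" for F G H
    using cii that unfolding cond_ii_def ceq by blast
  have finFs: "finite Fs"
  proof -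
    have "Fs \<subseteq> Pow {1..n}" using Fp by blast
    then show ?thesis by (rule finite_subset) simp
  qed
  define r where "r = card Fs"
  have rm: "r \<le> m" using cFm unfolding r_def by simp
  obtain e where e: "bij_betw e {0..<r} Fs" using ex_bij_betw_nat_finite[OF finFs] unfolding r_def by blast
  have eF: "e j \<in> Fs" if "j < r" for j using e that unfolding bij_betw_def by auto
  have einj: "e j = e l \<Longrightarrow> j < r \<Longrightarrow> l < r \<Longrightarrow> j = l" for j l
    using e unfolding bij_betw_def inj_on_def by auto
  have efin: "finite (e j)" "e j \<subseteq> {1..n}" "card (e j) = m" if "j < r" for j using Fp eF that by auto
  define S where "S j = {l. l < r \<and> l \<noteq> j \<and> e j \<inter> e l \<noteq> {}}" for j
  define sh where "sh j l = (SOME x. e j \<inter> e l = {x})" for j l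
  have sh: "e j \<inter> e l = {sh j l}" if "j < r" "l \<in> S j" for j l
  proof -
    have l: "l < r" "l \<noteq> j" "e j \<inter> e l \<noteq> {}" using that unfolding S_def by auto
    have "e j \<noteq> e l" using einj l that by blast
    then have "card (e j \<inter> e l) \<le> 1" using int1 eF l that by blast
    moreover have "finite (e j \<inter> e l)" using efin that by blast
    ultimately have "\<exists>x. e j \<inter> e l = {x}" using l(3)
      by (metis card_0_eq card_1_singletonE le_eq_less_or_eq less_one)
    then show ?thesis unfolding sh_def by (rule someI_ex)
  qed
  have Ssub: "S j \<subseteq> {0..<m}" for j using rm unfolding S_def by auto
  have shin: "sh j l \<in> e j" if "j < r" "l \<in> S j" for j l using sh[OF that] by blast
  have shinj: "inj_on (sh j) (S j)" if j: "j < r" for j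
  proof (rule inj_onI)
    fix l l' assume l: "l \<in> S j" and l': "l' \<in> S j" and eq: "sh j l = sh j l'"
    show "l = l'"
    proof (rule ccontr)
      assume ne: "l \<noteq> l'"
      have lr: "l < r" "l \<noteq> j" "l' < r" "l' \<noteq> j" using l l' unfolding S_def by auto
      have "sh j l \<in> e j \<inter> e l \<inter> e l'" using sh[OF j l] sh[OF j l'] eq by auto
      moreover have "e j \<noteq> e l" "e j \<noteq> e l'" "e l \<noteq> e l'" using einj lr ne j by blast+
      ultimately show False using tri[OF eF[OF j] eF[OF lr(1)] eF[OF lr(3)]] by blast
    qed
  qed
  define P where "P j = e j - sh j ` S j" for j
  define Q where "Q j = {0..<m} - S j" for j
  have cPQ: "card (Q j) = card (P j)" if j: "j < r" for j
  proof -
    have "sh j ` S j \<subseteq> e j" using shin j by blast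
    then have "card (P j) = m - card (sh j ` S j)" unfolding P_def using efin[OF j]
      by (simp add: card_Diff_subset finite_subset)
    also have "card (sh j ` S j) = card (S j)" using shinj[OF j] by (simp add: card_image)
    finally have "card (P j) = m - card (S j)" .
    moreover have "finite (S j)" using Ssub[of j] by (rule finite_subset) simp
    then have "card (Q j) = m - card (S j)" unfolding Q_def using card_Diff_subset[of "S j" "{0..<m}"] Ssub[of j] by simp
    ultimately show ?thesis by simp
  qed
  have "\<forall>j. \<exists>b. j < r \<longrightarrow> bij_betw b (Q j) (P j)"
  proof
    fix j show "\<exists>b. j < r \<longrightarrow> bij_betw b (Q j) (P j)"
    proof (cases "j < r")
      case True
      have "finite (Q j)" "finite (P j)" unfolding Q_def P_def using efin[OF True] by auto
      then show ?thesis using finite_same_card_bij cPQ[OF True] by blast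
    qed simp
  qed
  then obtain b where b: "\<And>j. j < r \<Longrightarrow> bij_betw (b j) (Q j) (P j)" by metis
  define q where "q j p = (if p \<in> S j then sh j p else b j p)" for j p
  have qbij: "bij_betw (q j) {0..<m} (e j)" if j: "j < r" for j
  proof -
    have bb: "bij_betw (b j) (Q j) (P j)" using b j .
    have img: "q j ` {0..<m} = e j"
    proof -
      have U: "{0..<m} = S j \<union> Q j" unfolding Q_def using Ssub by auto
      have "q j ` {0..<m} = q j ` S j \<union> q j ` Q j" by (subst U) (rule image_Un)
      also have "q j ` S j = sh j ` S j" unfolding q_def by simp
      also have "q j ` Q j = b j ` Q j" unfolding q_def Q_def by simp
      also have "b j ` Q j = P j" using bb unfolding bij_betw_def by simp
      also have "sh j ` S j \<union> P j = e j" unfolding P_def using shin[OF j] by blast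
      finally show ?thesis .
    qed
    have inj: "inj_on (q j) {0..<m}"
    proof (rule inj_onI)
      fix p p' assume p: "p \<in> {0..<m}" and p': "p' \<in> {0..<m}" and eq: "q j p = q j p'"
      consider "p \<in> S j" "p' \<in> S j" | "p \<in> S j" "p' \<notin> S j" | "p \<notin> S j" "p' \<in> S j" | "p \<notin> S j" "p' \<notin> S j"
        by blast
      then show "p = p'"
      proof cases
        case 1 then show ?thesis using eq shinj[OF j] unfolding q_def inj_on_def by simp
      next
        case 2
        have "q j p' \<in> P j" using bb p' 2 unfolding q_def Q_def bij_betw_def by auto
        moreover have "q j p \<in> sh j ` S j" using 2 unfolding q_def by simp
        ultimately show ?thesis using eq unfolding P_def by simp
      next
        case 3
        have "q j p \<in> P j" using bb p 3 unfolding q_def Q_def bij_betw_def by auto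
        moreover have "q j p' \<in> sh j ` S j" using 3 unfolding q_def by simp
        ultimately show ?thesis using eq unfolding P_def by simp
      next
        case 4
        then have "b j p = b j p'" using eq unfolding q_def by simp
        moreover have "p \<in> Q j" "p' \<in> Q j" using 4 p p' unfolding Q_def by auto
        ultimately show ?thesis using bb unfolding bij_betw_def inj_on_def by blast
      qed
    qed
    show ?thesis using inj img unfolding bij_betw_def by simp
  qed
  have qin: "q j p \<in> e j" if "j < r" "p < m" for j p using qbij[OF that(1)] that(2) unfolding bij_betw_def by auto
  have qinj: "p = p'" if "j < r" "p < m" "p' < m" "q j p = q j p'" for j p p'
    using qbij[OF that(1)] that(2-4) unfolding bij_betw_def inj_on_def by auto
  have qcross: "p = l" if j: "j < r" and l: "l < r" and jl: "j \<noteq> l" and p: "p < m" and x: "q j p \<in> e l" for j l p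
  proof -
    have "q j p \<in> e j \<inter> e l" using qin[OF j p] x by blast
    then have lS: "l \<in> S j" unfolding S_def using l jl by blast
    then have "q j p = sh j l" using sh[OF j lS] qin[OF j p] x by blast
    moreover have "q j l = sh j l" using lS unfolding q_def by simp
    ultimately show "p = l" using qinj[OF j p] lS Ssub by fastforce
  qed
  have kp: "j + p = l + p'" "j \<noteq> l \<Longrightarrow> p = l \<and> p' = j"
    if "j < r" "l < r" "p < m" "p' < m" "q j p = q l p'" for j l p p'
  proof -
    show "j \<noteq> l \<Longrightarrow> p = l \<and> p' = j"
    proof -
      assume jl: "j \<noteq> l"
      have "p = l" using qcross[OF that(1,2) jl that(3)] qin[OF that(2,4)] that(5) by simp
      moreover have "p' = j" using qcross[OF that(2,1) jl[symmetric] that(4)] qin[OF that(1,3)] that(5) by simp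
      ultimately show "p = l \<and> p' = j" by simp
    qed
    show "j + p = l + p'"
    proof (cases "j = l")
      case True then show ?thesis using qinj that by auto
    next
      case False
      then have "p = l \<and> p' = j" using \<open>j \<noteq> l \<Longrightarrow> p = l \<and> p' = j\<close> by blast
      then show ?thesis by simp
    qed
  qed
  define Sx where "Sx x = (SOME s. \<exists>j'<r. \<exists>p'<m. x = q j' p' \<and> s = j' + p')" for x
  define kk where "kk x = (if \<exists>j'<r. \<exists>p'<m. x = q j' p' then Sx x else 0)" for x
  have kkq: "kk (q j p) = j + p" if "j < r" "p < m" for j p
  proof -
    have ex: "\<exists>j'<r. \<exists>p'<m. q j p = q j' p'" using that by blast
    have "\<exists>j'<r. \<exists>p'<m. q j p = q j' p' \<and> Sx (q j p) = j' + p'"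
      unfolding Sx_def by (rule someI_ex) (use that in blast)
    then obtain j' p' where jp: "j' < r" "p' < m" "q j p = q j' p'" "Sx (q j p) = j' + p'" by blast
    have "j + p = j' + p'" using kp(1)[OF that(1) jp(1) that(2) jp(2) jp(3)] .
    then show ?thesis unfolding kk_def using ex jp(4) by simp
  qed
  define \<pi> where "\<pi> v = card {u\<in>{1..n}. kk u < kk v \<or> (kk u = kk v \<and> u < v)} + 1" for v
  have pib: "bij_betw \<pi> {1..n} {1..n}" unfolding \<pi>_def using rank_bij(1)[where kk=kk and n=n] .
  have pim: "\<pi> v < \<pi> w" if "v \<in> {1..n}" "w \<in> {1..n}" "kk v < kk w" for v w
    unfolding \<pi>_def using rank_bij(2)[where kk=kk and n=n, OF that] .
  define g where "g j p = \<pi> (q j p)" for j p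
  have qn: "q j p \<in> {1..n}" if "j < r" "p < m" for j p
  proof -
    have "q j p \<in> e j" by (rule qin[OF that])
    then show ?thesis using efin(2)[OF that(1)] by blast
  qed
  have gmono: "g j p < g j p'" if "j < r" "p < p'" "p' < m" for j p p'
  proof -
    have "kk (q j p) < kk (q j p')" using kkq[of j p] kkq[of j p'] that by simp
    then show ?thesis unfolding g_def using pim qn that by simp
  qed
  have pinj: "inj_on \<pi> {1..n}" using pib unfolding bij_betw_def by blast
  have gsep: "j = l" if "j < r" "l < r" "p < m" "g j p = g l p" for j l p
  proof (rule ccontr)
    assume jl: "j \<noteq> l"
    have "q j p = q l p" using inj_onD[OF pinj that(4)[unfolded g_def] qn[OF that(1,3)] qn[OF that(2,3)]] .
    then have "p = l \<and> p = j" using kp(2)[OF that(1) that(2) that(3) that(3)] jl by blast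
    then show False using jl by simp
  qed
  have img: "(`) \<pi> ` Fs = (\<lambda>j. g j ` {0..<m}) ` {0..<r}"
  proof -
    have "Fs = e ` {0..<r}" using e unfolding bij_betw_def by simp
    then have "(`) \<pi> ` Fs = (\<lambda>j. \<pi> ` e j) ` {0..<r}" by (simp add: image_image)
    also have "\<dots> = (\<lambda>j. g j ` {0..<m}) ` {0..<r}"
    proof (rule image_cong[OF refl])
      fix j assume "j \<in> {0..<r}"
      then have "e j = q j ` {0..<m}" using qbij unfolding bij_betw_def by simp
      then show "\<pi> ` e j = g j ` {0..<m}" unfolding g_def by (simp add: image_image)
    qed
    finally show ?thesis .
  qed
  have cw: "closed_wrt m ((\<lambda>j. g j ` {0..<m}) ` {0..<r})"
  proof (rule closed_by_g)
    show "g j p < g j p'" if "j < r" "p < p'" "p' < m" for j p p' using gmono[OF that] .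
    show "j = l" if "j < r" "l < r" "p < m" "g j p = g l p" for j l p using gsep[OF that] .
  qed
  show ?thesis unfolding closed_complex_def
    by (rule exI[of _ \<pi>]) (use pib img cw in simp)
qed

theorem theorem3p4:
  shows
   "(\<forall>(m::nat) (n::nat) Fs. 3 \<le> m \<and> pure_complex m n Fs \<and> cond_i m n Fs \<and> cond_ii m n Fs \<and>
        cliques_simplices m n Fs \<and> closed_wrt m Fs \<longrightarrow>
        (\<exists>fs. regular_sequence (polyring m n) fs \<and>
              ideal_gen (polyring m n) (set fs) = (J_Delta m n Fs :: 'a::field mpoly set)))
    \<and> (\<forall>(V::'v set) E (m::nat). simple_graph V E \<and> V \<noteq> {} \<and> card V \<le> m \<and> 3 \<le> m \<longrightarrow>
        (\<exists>n Fs. pure_complex m n Fs \<and> closed_complex m n Fs \<and> cond_i m n Fs \<and> cond_ii m n Fs \<and>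
              cliques_simplices m n Fs \<and> clique_graph_iso m n Fs V E))
    \<and> (\<forall>(m::nat) (n::nat) Fs. 3 \<le> m \<and> pure_complex m n Fs \<and> cond_i m n Fs \<and> cond_ii m n Fs \<and>
        cliques_simplices m n Fs \<and> card Fs \<le> m \<longrightarrow> closed_complex m n Fs)"
proof (intro conjI)
  show "\<forall>(m::nat) (n::nat) Fs. 3 \<le> m \<and> pure_complex m n Fs \<and> cond_i m n Fs \<and> cond_ii m n Fs \<and>
        cliques_simplices m n Fs \<and> closed_wrt m Fs \<longrightarrow>
        (\<exists>fs. regular_sequence (polyring m n) fs \<and>
              ideal_gen (polyring m n) (set fs) = (J_Delta m n Fs :: 'a::field mpoly set))"
    by (intro allI impI) (rule part_a)
  show "\<forall>(V::'v set) E (m::nat). simple_graph V E \<and> V \<noteq> {} \<and> card V \<le> m \<and> 3 \<le> m \<longrightarrow>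
        (\<exists>n Fs. pure_complex m n Fs \<and> closed_complex m n Fs \<and> cond_i m n Fs \<and> cond_ii m n Fs \<and>
              cliques_simplices m n Fs \<and> clique_graph_iso m n Fs V E)"
    by (intro allI impI) (rule part_b)
  show "\<forall>(m::nat) (n::nat) Fs. 3 \<le> m \<and> pure_complex m n Fs \<and> cond_i m n Fs \<and> cond_ii m n Fs \<and>
        cliques_simplices m n Fs \<and> card Fs \<le> m \<longrightarrow> closed_complex m n Fs"
    by (intro allI impI) (rule part_c)
qed

end
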